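(* There exists an Orlicz function $\Phi$ such that the Orlicz space $L_\Phi$ is $(1-DH)$ but fails to be uniformly $(1-DH)$. Moreover, there is no constant $c>0$ such that for every sequence of pairwise disjoint measurable sets $E_n\subset[0,1]$ of positive measure there is a subsequence $(E_{n_k})$ satisfying $\big\|\sum_{k=1}^m\bar\chi_{E_{n_k}}\big\|_{L_\Phi}\ge cm$ for all $m=1,2,\dots$.
   Context: An Orlicz function is an increasing convex function on $[0,\infty)$ vanishing at $0$ and tending to $\infty$. $L_\Phi$ is the Orlicz space on $[0,1]$ with Luxemburg norm $\|f\|_{L_\Phi}=\inf\{\lambda>0:\int_0^1\Phi(|f|/\lambda)\le1\}$; $\bar\chi_A:=\chi_A/\|\chi_A\|_{L_\Phi}$. $L_\Phi$ is $(1-DH)$ if every sequence of pairwise disjoint norm-one elements has a subsequence equivalent to the unit vector basis of $\ell_1$; it is uniformly $(1-DH)$ if there is a constant $C$ such that this subsequence can always be chosen $C$-equivalent ($C^{-1}\|\sum c_kx_k\|\le\|\sum c_ky_k\|\le C\|\sum c_kx_k\|$) to the unit vector basis of $\ell_1$. *)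

theory Defs
  imports "HOL-Analysis.Analysis"
begin

definition orlicz_function :: "(real \<Rightarrow> real) \<Rightarrow> bool" where
  "orlicz_function \<Phi> \<longleftrightarrow> mono_on {0..} \<Phi> \<and> convex_on {0..} \<Phi> \<and> \<Phi> 0 = 0
     \<and> filterlim \<Phi> at_top at_top"

abbreviation I01 :: "real measure" where
  "I01 \<equiv> lebesgue_on {0..1}"

definition orlicz_modular :: "(real \<Rightarrow> real) \<Rightarrow> (real \<Rightarrow> real) \<Rightarrow> real \<Rightarrow> ennreal" where
  "orlicz_modular \<Phi> f lam = (\<integral>\<^sup>+ x. ennreal (\<Phi> (\<bar>f x\<bar> / lam)) \<partial>I01)"

definition orlicz_space :: "(real \<Rightarrow> real) \<Rightarrow> (real \<Rightarrow> real) set" where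
  "orlicz_space \<Phi> = {f. f \<in> borel_measurable I01 \<and> (\<exists>lam>0. orlicz_modular \<Phi> f lam \<le> 1)}"

definition lux_norm :: "(real \<Rightarrow> real) \<Rightarrow> (real \<Rightarrow> real) \<Rightarrow> real" where
  "lux_norm \<Phi> f = Inf {lam. lam > 0 \<and> orlicz_modular \<Phi> f lam \<le> 1}"

definition chi_bar :: "(real \<Rightarrow> real) \<Rightarrow> real set \<Rightarrow> real \<Rightarrow> real" where
  "chi_bar \<Phi> A = (\<lambda>x. indicator A x / lux_norm \<Phi> (indicator A))"

definition l1_equiv :: "(real \<Rightarrow> real) \<Rightarrow> (nat \<Rightarrow> real \<Rightarrow> real) \<Rightarrow> real \<Rightarrow> bool" where
  "l1_equiv \<Phi> x C \<longleftrightarrow> (\<forall>(m::nat) (c::nat \<Rightarrow> real).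
      (1 / C) * (\<Sum>k<m. \<bar>c k\<bar>) \<le> lux_norm \<Phi> (\<lambda>t. \<Sum>k<m. c k * x k t)
    \<and> lux_norm \<Phi> (\<lambda>t. \<Sum>k<m. c k * x k t) \<le> C * (\<Sum>k<m. \<bar>c k\<bar>))"

definition disj_normalized :: "(real \<Rightarrow> real) \<Rightarrow> (nat \<Rightarrow> real \<Rightarrow> real) \<Rightarrow> bool" where
  "disj_normalized \<Phi> f \<longleftrightarrow>
     (\<forall>n. f n \<in> orlicz_space \<Phi> \<and> lux_norm \<Phi> (f n) = 1)
   \<and> (\<forall>n m. n \<noteq> m \<longrightarrow> (AE x in I01. f n x = 0 \<or> f m x = 0))"

definition one_DH :: "(real \<Rightarrow> real) \<Rightarrow> bool" where
  "one_DH \<Phi> \<longleftrightarrow> (\<forall>f. disj_normalized \<Phi> f \<longrightarrow>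
      (\<exists>r C. strict_mono r \<and> C > 0 \<and> l1_equiv \<Phi> (f \<circ> r) C))"

definition uniform_one_DH :: "(real \<Rightarrow> real) \<Rightarrow> bool" where
  "uniform_one_DH \<Phi> \<longleftrightarrow> (\<exists>C>0. \<forall>f. disj_normalized \<Phi> f \<longrightarrow>
      (\<exists>r. strict_mono r \<and> l1_equiv \<Phi> (f \<circ> r) C))"

end

theory Submission
  imports Defs
begin

definition rk :: "nat set \<Rightarrow> nat \<Rightarrow> nat" where
  "rk E e = card (E \<inter> {..<e})"

definition NN :: "nat set \<Rightarrow> real \<Rightarrow> nat" where
  "NN E x = card {e\<in>E. (2::real)^e < x}"

definition PhiE :: "nat set \<Rightarrow> real \<Rightarrow> real" where
  "PhiE E s = s + (\<Sum>e\<in>E \<inter> {..<nat \<lceil>s\<rceil>}. 2^(rk E e) * max 0 (s - 2^e))"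

lemma pow2_gt: "real e < (2::real)^e"
  by (metis less_exp of_nat_less_iff of_nat_numeral of_nat_power)

lemma less_nat_ceil: "x < nat \<lceil>s\<rceil> \<longleftrightarrow> real x < s"
  by linarith

lemma PhiE_K: assumes "s \<le> real K"
  shows "PhiE E s = s + (\<Sum>e\<in>E \<inter> {..<K}. 2^(rk E e) * max 0 (s - 2^e))"
proof -
  have K: "nat \<lceil>s\<rceil> \<le> K" using assms by (simp add: nat_le_iff ceiling_le_iff)
  have A: "E \<inter> {..<K} = (E \<inter> {..<nat \<lceil>s\<rceil>}) \<union> (E \<inter> {nat \<lceil>s\<rceil>..<K})"
    using K by (auto simp: less_nat_ceil)
  have B: "(\<Sum>e\<in>E \<inter> {nat \<lceil>s\<rceil>..<K}. (2::real)^(rk E e) * max 0 (s - 2^e)) = 0"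
  proof (rule sum.neutral, clarify)
    fix e assume "e \<in> E" "e \<in> {nat \<lceil>s\<rceil>..<K}"
    hence "s \<le> real e" using less_nat_ceil[of e s] by auto
    hence "s \<le> 2^e" using pow2_gt[of e] by linarith
    thus "(2::real)^(rk E e) * max 0 (s - 2^e) = 0" by simp
  qed
  show ?thesis unfolding PhiE_def A
    by (subst sum.union_disjoint) (auto simp: B less_nat_ceil)
qed

lemma sum_rank: "(\<Sum>e\<in>(D::nat set) \<inter> {..<n}. (2::real)^(card (D \<inter> {..<e}))) = 2^(card (D \<inter> {..<n})) - 1"
proof (induct n)
  case 0 then show ?case by simp
next
  case (Suc n)
  show ?case
  proof (cases "n \<in> D")
    case True
    have eq: "D \<inter> {..<Suc n} = insert n (D \<inter> {..<n})" using True by auto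
    have "card (D \<inter> {..<Suc n}) = Suc (card (D \<inter> {..<n}))" unfolding eq by simp
    then show ?thesis unfolding eq using Suc by (simp add: algebra_simps)
  next
    case False
    have eq: "D \<inter> {..<Suc n} = D \<inter> {..<n}" using False by (auto simp: less_Suc_eq)
    then show ?thesis using Suc by simp
  qed
qed

lemma finite_low: "finite {e\<in>E. (2::real)^e < x}"
proof -
  have "{e\<in>E. (2::real)^e < x} \<subseteq> {..<nat \<lceil>x\<rceil>}"
    using pow2_gt by (auto, smt (verit) of_nat_ceiling less_ceiling_iff of_nat_less_iff)
  thus ?thesis using finite_subset by blast
qed

lemma sum_rank_low:
  "(\<Sum>e\<in>{e\<in>E. (2::real)^e < x}. (2::real)^(rk E e)) = 2^(NN E x) - 1"
proof -
  define D where "D = {e\<in>E. (2::real)^e < x}"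
  have fin: "finite D" unfolding D_def by (rule finite_low)
  obtain n where n: "D \<subseteq> {..<n}" using fin finite_nat_iff_bounded by auto
  have r: "rk E e = card (D \<inter> {..<e})" if "e \<in> D" for e
  proof -
    have "E \<inter> {..<e} = D \<inter> {..<e}" using that unfolding D_def
      by (auto, meson less_trans power_strict_increasing_iff one_less_numeral_iff semiring_norm(76))
    thus ?thesis unfolding rk_def by simp
  qed
  have "(\<Sum>e\<in>D. (2::real)^(rk E e)) = (\<Sum>e\<in>D \<inter> {..<n}. (2::real)^(card (D \<inter> {..<e})))"
    using n r by (intro sum.cong) auto
  also have "\<dots> = 2^(card (D \<inter> {..<n})) - 1" by (rule sum_rank)
  also have "D \<inter> {..<n} = D" using n by auto
  finally show ?thesis unfolding D_def NN_def by simp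
qed

lemma hinge_convex:
  assumes "0 \<le> t" "t \<le> 1"
  shows "max 0 ((1-t)*x + t*y - b) \<le> (1-t) * max 0 (x - b) + t * max (0::real) (y - b)"
proof -
  have "(1-t)*x + t*y - b = (1-t)*(x-b) + t*(y-b)" by (simp add: algebra_simps)
  moreover have "(1-t)*(x-b) \<le> (1-t) * max 0 (x-b)" using assms by (intro mult_left_mono) auto
  moreover have "t*(y-b) \<le> t * max 0 (y-b)" using assms by (intro mult_left_mono) auto
  moreover have "0 \<le> (1-t) * max 0 (x - b) + t * max (0::real) (y - b)" using assms by auto
  ultimately show ?thesis by linarith
qed

lemma PhiE_low: "PhiE E s = s + (\<Sum>e\<in>{e\<in>E. (2::real)^e < s}. 2^(rk E e) * (s - 2^e))"
proof -
  have K: "s \<le> real (nat \<lceil>s\<rceil>)" by linarith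
  have sub: "{e\<in>E. (2::real)^e < s} \<subseteq> E \<inter> {..<nat \<lceil>s\<rceil>}"
  proof
    fix e assume a: "e \<in> {e\<in>E. (2::real)^e < s}"
    have b: "real e < 2^e" by (rule pow2_gt)
    from a have "e \<in> E" by simp
    moreover from a b have "real e < s" by (metis (mono_tags) mem_Collect_eq less_trans)
    ultimately have "e \<in> E" "real e < s" by auto
    thus "e \<in> E \<inter> {..<nat \<lceil>s\<rceil>}" by (simp add: less_nat_ceil)
  qed
  have "(\<Sum>e\<in>E \<inter> {..<nat \<lceil>s\<rceil>}. (2::real)^(rk E e) * max 0 (s - 2^e))
      = (\<Sum>e\<in>{e\<in>E. (2::real)^e < s}. 2^(rk E e) * max 0 (s - 2^e))"
    by (rule sum.mono_neutral_right) (use sub in auto)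
  also have "\<dots> = (\<Sum>e\<in>{e\<in>E. (2::real)^e < s}. 2^(rk E e) * (s - 2^e))"
    by (rule sum.cong) auto
  finally show ?thesis unfolding PhiE_def by simp
qed

lemma PhiE_0[simp]: "PhiE E 0 = 0"
proof -
  have "{e\<in>E. (2::real)^e < 0} = {}" by (auto simp: not_less)
  thus ?thesis unfolding PhiE_low by simp
qed

lemma PhiE_ge: "s \<le> PhiE E s"
  unfolding PhiE_low by (auto intro!: sum_nonneg)

lemma PhiE_diff: assumes "x \<le> y" shows "y - x \<le> PhiE E y - PhiE E x"
proof -
  define K where "K = nat \<lceil>y\<rceil>"
  have Ky: "y \<le> real K" unfolding K_def by linarith
  have Kx: "x \<le> real K" using Ky assms by linarith
  have "(\<Sum>e\<in>E \<inter> {..<K}. (2::real)^(rk E e) * max 0 (x - 2^e))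
      \<le> (\<Sum>e\<in>E \<inter> {..<K}. (2::real)^(rk E e) * max 0 (y - 2^e))"
    using assms by (intro sum_mono mult_left_mono) auto
  thus ?thesis unfolding PhiE_K[OF Ky] PhiE_K[OF Kx] by linarith
qed

lemma PhiE_mono: "mono (PhiE E)"
proof (rule monoI)
  fix x y :: real assume "x \<le> y" thus "PhiE E x \<le> PhiE E y" using PhiE_diff[of x y E] by linarith
qed

lemma PhiE_strict: "x < y \<Longrightarrow> PhiE E x < PhiE E y"
  using PhiE_diff[of x y E] by linarith

lemma PhiE_nonneg: "0 \<le> s \<Longrightarrow> 0 \<le> PhiE E s"
  using PhiE_ge[of s E] by linarith

lemma PhiE_convex: "convex_on UNIV (PhiE E)"
proof (rule convex_onI)
  fix t x y :: real assume t: "0 < t" "t < 1"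
  define K where "K = nat \<lceil>max x y\<rceil>"
  have Kx: "x \<le> real K" and Ky: "y \<le> real K" unfolding K_def by linarith+
  have Kz: "(1-t)*x + t*y \<le> real K"
  proof -
    have "(1-t)*x + t*y \<le> (1-t)*K + t*K" using t Kx Ky
      by (intro add_mono mult_left_mono) auto
    thus ?thesis by (simp add: algebra_simps)
  qed
  have "(\<Sum>e\<in>E \<inter> {..<K}. (2::real)^(rk E e) * max 0 ((1-t)*x + t*y - 2^e))
     \<le> (\<Sum>e\<in>E \<inter> {..<K}. (1-t) * ((2::real)^(rk E e) * max 0 (x - 2^e)) + t * (2^(rk E e) * max 0 (y - 2^e)))"
  proof (rule sum_mono)
    fix e
    have "(2::real)^(rk E e) * max 0 ((1-t)*x + t*y - 2^e) \<le> 2^(rk E e) * ((1-t) * max 0 (x - 2^e) + t * max (0::real) (y - 2^e))"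
      using hinge_convex[of t x y "2^e"] t by (intro mult_left_mono) auto
    thus "(2::real)^(rk E e) * max 0 ((1-t)*x + t*y - 2^e) \<le> (1-t) * ((2::real)^(rk E e) * max 0 (x - 2^e)) + t * (2^(rk E e) * max 0 (y - 2^e))"
      by (simp add: algebra_simps)
  qed
  also have "\<dots> = (1-t) * (\<Sum>e\<in>E \<inter> {..<K}. (2::real)^(rk E e) * max 0 (x - 2^e)) + t * (\<Sum>e\<in>E \<inter> {..<K}. (2::real)^(rk E e) * max 0 (y - 2^e))"
    by (simp add: sum.distrib sum_distrib_left)
  finally have C: "(\<Sum>e\<in>E \<inter> {..<K}. (2::real)^(rk E e) * max 0 ((1-t)*x + t*y - 2^e)) \<le> (1-t) * (\<Sum>e\<in>E \<inter> {..<K}. (2::real)^(rk E e) * max 0 (x - 2^e)) + t * (\<Sum>e\<in>E \<inter> {..<K}. (2::real)^(rk E e) * max 0 (y - 2^e))" .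
  have eq: "(1 - t) *\<^sub>R x + t *\<^sub>R y = (1-t)*x + t*y" by simp
  show "PhiE E ((1 - t) *\<^sub>R x + t *\<^sub>R y) \<le> (1 - t) * PhiE E x + t * PhiE E y"
    unfolding eq PhiE_K[OF Kx] PhiE_K[OF Ky] PhiE_K[OF Kz] using C by (simp add: algebra_simps)
qed auto

lemma PhiE_upper: assumes "0 \<le> s" shows "PhiE E s \<le> s * 2^(NN E s)"
proof -
  have "(\<Sum>e\<in>{e\<in>E. (2::real)^e < s}. 2^(rk E e) * (s - 2^e)) \<le> (\<Sum>e\<in>{e\<in>E. (2::real)^e < s}. 2^(rk E e) * s)"
    by (intro sum_mono mult_left_mono) auto
  also have "\<dots> = s * (2^(NN E s) - 1)" using sum_rank_low[of E s]
    by (simp add: sum_distrib_left[symmetric] mult.commute)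
  finally show ?thesis unfolding PhiE_low by (simp add: algebra_simps)
qed

lemma PhiE_lower: assumes "0 \<le> x" "x \<le> s" shows "(s - x) * 2^(NN E x) \<le> PhiE E s"
proof -
  have sub: "{e\<in>E. (2::real)^e < x} \<subseteq> {e\<in>E. (2::real)^e < s}" using assms by auto
  have "(\<Sum>e\<in>{e\<in>E. (2::real)^e < x}. 2^(rk E e) * (s - x)) \<le> (\<Sum>e\<in>{e\<in>E. (2::real)^e < x}. 2^(rk E e) * (s - 2^e))"
    by (intro sum_mono mult_left_mono) auto
  also have "\<dots> \<le> (\<Sum>e\<in>{e\<in>E. (2::real)^e < s}. 2^(rk E e) * (s - 2^e))"
    by (rule sum_mono2[OF finite_low sub]) auto
  finally have A: "(s - x) * (2^(NN E x) - 1) \<le> (\<Sum>e\<in>{e\<in>E. (2::real)^e < s}. 2^(rk E e) * (s - 2^e))"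
    using sum_rank_low[of E x] by (simp add: sum_distrib_left[symmetric] mult.commute)
  have "s - x \<le> s" using assms by simp
  with A show ?thesis unfolding PhiE_low by (simp add: algebra_simps)
qed


locale orl =
  fixes \<Phi> :: "real \<Rightarrow> real"
  assumes mono: "mono \<Phi>" and zero: "\<Phi> 0 = 0"
    and subhom: "\<And>t x. 0 \<le> t \<Longrightarrow> t \<le> 1 \<Longrightarrow> 0 \<le> x \<Longrightarrow> \<Phi> (t * x) \<le> t * \<Phi> x"
begin

lemma nonneg: "0 \<le> x \<Longrightarrow> 0 \<le> \<Phi> x"
  using mono zero by (metis monoD)

lemma borel: "\<Phi> \<in> borel_measurable borel"
  using borel_measurable_mono[OF mono] .

lemma meas_mod: "(f::real\<Rightarrow>real) \<in> borel_measurable I01 \<Longrightarrow> (\<lambda>x. ennreal (\<Phi> (\<bar>f x\<bar> / lam))) \<in> borel_measurable I01"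
proof -
  assume f: "f \<in> borel_measurable I01"
  have 1: "(\<lambda>x. \<bar>f x\<bar> / lam) \<in> borel_measurable I01" using f by (intro borel_measurable_divide borel_measurable_abs) auto
  have 2: "(\<lambda>x. \<Phi> (\<bar>f x\<bar> / lam)) \<in> borel_measurable I01" using measurable_compose[OF 1 borel] by (simp add: o_def)
  show ?thesis using 2 by (rule measurable_compose[OF _ measurable_ennreal])
qed

lemma modular_mono: assumes "0 < l1" "l1 \<le> l2"
  shows "orlicz_modular \<Phi> f l2 \<le> orlicz_modular \<Phi> f l1"
  unfolding orlicz_modular_def
proof (rule nn_integral_mono)
  fix x
  have "\<bar>f x\<bar> / l2 \<le> \<bar>f x\<bar> / l1" using assms by (intro divide_left_mono) auto
  thus "ennreal (\<Phi> (\<bar>f x\<bar> / l2)) \<le> ennreal (\<Phi> (\<bar>f x\<bar> / l1))"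
    using mono by (intro ennreal_leI) (auto dest: monoD)
qed

lemma modular_scale: assumes "0 < l1" "l1 \<le> l2" and f: "f \<in> borel_measurable I01"
  shows "orlicz_modular \<Phi> f l2 \<le> ennreal (l1/l2) * orlicz_modular \<Phi> f l1"
  unfolding orlicz_modular_def
proof -
  have "(\<integral>\<^sup>+ x. ennreal (\<Phi> (\<bar>f x\<bar> / l2)) \<partial>I01) \<le> (\<integral>\<^sup>+ x. ennreal (l1/l2) * ennreal (\<Phi> (\<bar>f x\<bar> / l1)) \<partial>I01)"
  proof (rule nn_integral_mono)
    fix x
    have "\<bar>f x\<bar> / l2 = (l1/l2) * (\<bar>f x\<bar> / l1)" using assms by (simp add: field_simps)
    moreover have "\<Phi> ((l1/l2) * (\<bar>f x\<bar> / l1)) \<le> (l1/l2) * \<Phi> (\<bar>f x\<bar> / l1)"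
      by (rule subhom) (use assms in auto)
    ultimately have "\<Phi> (\<bar>f x\<bar> / l2) \<le> (l1/l2) * \<Phi> (\<bar>f x\<bar> / l1)" by simp
    moreover have "ennreal (l1/l2) * ennreal (\<Phi> (\<bar>f x\<bar> / l1)) = ennreal ((l1/l2) * \<Phi> (\<bar>f x\<bar> / l1))"
      by (rule ennreal_mult[symmetric]) (use assms nonneg in auto)
    ultimately show "ennreal (\<Phi> (\<bar>f x\<bar> / l2)) \<le> ennreal (l1/l2) * ennreal (\<Phi> (\<bar>f x\<bar> / l1))"
      by (simp add: ennreal_leI)
  qed
  also have "\<dots> = ennreal (l1/l2) * (\<integral>\<^sup>+ x. ennreal (\<Phi> (\<bar>f x\<bar> / l1)) \<partial>I01)"
    using f by (intro nn_integral_cmult meas_mod)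
  finally show "(\<integral>\<^sup>+ x. ennreal (\<Phi> (\<bar>f x\<bar> / l2)) \<partial>I01) \<le> ennreal (l1/l2) * (\<integral>\<^sup>+ x. ennreal (\<Phi> (\<bar>f x\<bar> / l1)) \<partial>I01)" .
qed

lemma lux_le: assumes "\<And>l. l > L \<Longrightarrow> orlicz_modular \<Phi> f l \<le> 1" "0 \<le> L"
  shows "lux_norm \<Phi> f \<le> L"
  unfolding lux_norm_def
proof (rule dense_ge)
  fix y assume "L < y"
  hence "y \<in> {lam. lam > 0 \<and> orlicz_modular \<Phi> f lam \<le> 1}" using assms by auto
  moreover have "bdd_below {lam. lam > 0 \<and> orlicz_modular \<Phi> f lam \<le> 1}"
    by (rule bdd_belowI[of _ 0]) auto
  ultimately show "Inf {lam. lam > 0 \<and> orlicz_modular \<Phi> f lam \<le> 1} \<le> y" by (rule cInf_lower)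
qed

lemma lux_ge: assumes "\<exists>l>0. orlicz_modular \<Phi> f l \<le> 1"
  and "\<And>l. 0 < l \<Longrightarrow> l < L \<Longrightarrow> 1 < orlicz_modular \<Phi> f l"
  shows "L \<le> lux_norm \<Phi> f"
  unfolding lux_norm_def
proof (rule cInf_greatest)
  show "{lam. lam > 0 \<and> orlicz_modular \<Phi> f lam \<le> 1} \<noteq> {}" using assms by auto
  fix x assume "x \<in> {lam. lam > 0 \<and> orlicz_modular \<Phi> f lam \<le> 1}"
  thus "L \<le> x" using assms(2)[of x] by (auto simp: not_less[symmetric])
qed

lemma norm1_gt: assumes "lux_norm \<Phi> f = 1" "0 < l" "l < 1"
  shows "1 < orlicz_modular \<Phi> f l"
proof (rule ccontr)
  assume "\<not> 1 < orlicz_modular \<Phi> f l"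
  hence "l \<in> {lam. lam > 0 \<and> orlicz_modular \<Phi> f lam \<le> 1}" using assms by (auto simp: not_less)
  moreover have "bdd_below {lam. lam > 0 \<and> orlicz_modular \<Phi> f lam \<le> 1}"
    by (rule bdd_belowI[of _ 0]) auto
  ultimately have "lux_norm \<Phi> f \<le> l" unfolding lux_norm_def by (rule cInf_lower)
  thus False using assms by simp
qed

lemma norm1_le: assumes "lux_norm \<Phi> f = 1" "1 < l" "\<exists>l>0. orlicz_modular \<Phi> f l \<le> 1"
  shows "orlicz_modular \<Phi> f l \<le> 1"
proof -
  have "Inf {lam. lam > 0 \<and> orlicz_modular \<Phi> f lam \<le> 1} < l" using assms unfolding lux_norm_def by simp
  moreover have "bdd_below {lam. lam > 0 \<and> orlicz_modular \<Phi> f lam \<le> 1}"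
    by (rule bdd_belowI[of _ 0]) auto
  ultimately obtain l' where l': "l' \<in> {lam. lam > 0 \<and> orlicz_modular \<Phi> f lam \<le> 1}" "l' < l"
    using assms(3) by (subst (asm) cInf_less_iff) auto
  hence "orlicz_modular \<Phi> f l \<le> orlicz_modular \<Phi> f l'" by (intro modular_mono) auto
  thus ?thesis using l' by auto
qed

lemma modular_cmult: assumes "c \<noteq> 0" "0 < l"
  shows "orlicz_modular \<Phi> (\<lambda>x. c * f x) l = orlicz_modular \<Phi> f (l / \<bar>c\<bar>)"
  unfolding orlicz_modular_def using assms by (simp add: abs_mult field_simps)

lemma modular_zero: "orlicz_modular \<Phi> (\<lambda>x. 0) l = 0"
  unfolding orlicz_modular_def by (simp add: zero)

lemma sum_single:
  fixes g :: "nat \<Rightarrow> real" and F :: "real \<Rightarrow> 'b::comm_monoid_add"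
  assumes "\<forall>k<m. \<forall>k'<m. k \<noteq> k' \<longrightarrow> g k = 0 \<or> g k' = 0" "F 0 = 0"
  shows "F (\<Sum>k<m. g k) = (\<Sum>k<m. F (g k))"
proof (cases "\<exists>k0<m. g k0 \<noteq> 0")
  case True
  then obtain k0 where k0: "k0 < m" "g k0 \<noteq> 0" by auto
  have z: "\<And>k. k < m \<Longrightarrow> k \<noteq> k0 \<Longrightarrow> g k = 0" using assms(1) k0 by blast
  have "(\<Sum>k<m. g k) = g k0 + (\<Sum>k\<in>{..<m}-{k0}. g k)"
    using k0 by (intro sum.remove) auto
  also have "(\<Sum>k\<in>{..<m}-{k0}. g k) = 0" using z by (intro sum.neutral) auto
  finally have 1: "(\<Sum>k<m. g k) = g k0" by simp
  have "(\<Sum>k<m. F (g k)) = F (g k0) + (\<Sum>k\<in>{..<m}-{k0}. F (g k))"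
    using k0 by (intro sum.remove) auto
  also have "(\<Sum>k\<in>{..<m}-{k0}. F (g k)) = 0" using z assms(2) by (intro sum.neutral) auto
  finally have 2: "(\<Sum>k<m. F (g k)) = F (g k0)" by simp
  from 1 2
  show ?thesis by simp
next
  case False thus ?thesis using assms(2) by simp
qed

lemma modular_disj_sum:
  fixes g :: "nat \<Rightarrow> real \<Rightarrow> real"
  assumes ae: "AE x in I01. \<forall>k<m. \<forall>k'<m. k \<noteq> k' \<longrightarrow> g k x = 0 \<or> g k' x = 0"
    and meas: "\<And>k. g k \<in> borel_measurable I01" and l: "0 < l"
  shows "orlicz_modular \<Phi> (\<lambda>x. \<Sum>k<m. g k x) l = (\<Sum>k<m. orlicz_modular \<Phi> (g k) l)"
proof -
  have "orlicz_modular \<Phi> (\<lambda>x. \<Sum>k<m. g k x) l = (\<integral>\<^sup>+ x. (\<Sum>k<m. ennreal (\<Phi> (\<bar>g k x\<bar> / l))) \<partial>I01)"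
    unfolding orlicz_modular_def
  proof (rule nn_integral_cong_AE)
    show "AE x in I01. ennreal (\<Phi> (\<bar>\<Sum>k<m. g k x\<bar> / l)) = (\<Sum>k<m. ennreal (\<Phi> (\<bar>g k x\<bar> / l)))"
      using ae
    proof eventually_elim
      case (elim x)
      show ?case
        by (rule sum_single[where g="\<lambda>k. g k x" and F="\<lambda>y. ennreal (\<Phi> (\<bar>y\<bar> / l))"])
           (use elim zero in auto)
    qed
  qed
  also have "\<dots> = (\<Sum>k<m. orlicz_modular \<Phi> (g k) l)"
    unfolding orlicz_modular_def using meas by (intro nn_integral_sum meas_mod) auto
  finally show ?thesis .
qed

lemma modular_ind: assumes "A \<in> sets I01" "0 \<le> h" "0 < l"
  shows "orlicz_modular \<Phi> (\<lambda>x. h * indicator A x) l = ennreal (\<Phi> (h / l)) * emeasure I01 A"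
proof -
  have "orlicz_modular \<Phi> (\<lambda>x. h * indicator A x) l = (\<integral>\<^sup>+ x. ennreal (\<Phi> (h / l)) * indicator A x \<partial>I01)"
    unfolding orlicz_modular_def
    by (rule nn_integral_cong) (use assms zero in \<open>auto simp: indicator_def\<close>)
  also have "\<dots> = ennreal (\<Phi> (h / l)) * emeasure I01 A"
    using assms by (simp add: nn_integral_cmult_indicator)
  finally show ?thesis .
qed

end

lemma AE_pairwise:
  assumes "\<And>n m. n \<noteq> m \<Longrightarrow> AE x in M. P n m x"
  shows "AE x in M. \<forall>n::nat. \<forall>m::nat. n \<noteq> m \<longrightarrow> P n m x"
proof -
  have "\<forall>n m. AE x in M. n \<noteq> m \<longrightarrow> P n m x"
    using assms by (metis (mono_tags, lifting) AE_I2 eventually_mono)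
  hence "\<forall>n. AE x in M. \<forall>m. n \<noteq> m \<longrightarrow> P n m x" by (simp add: AE_all_countable)
  thus ?thesis by (simp add: AE_all_countable)
qed

context orl begin

definition good :: "(nat \<Rightarrow> real \<Rightarrow> real) \<Rightarrow> bool" where
  "good g \<longleftrightarrow> (\<forall>k. g k \<in> borel_measurable I01 \<and> lux_norm \<Phi> (g k) = 1 \<and> (\<exists>l>0. orlicz_modular \<Phi> (g k) l \<le> 1))
     \<and> (AE x in I01. \<forall>n m. n \<noteq> m \<longrightarrow> g n x = 0 \<or> g m x = 0)"

lemma good_sum_split:
  assumes "good g" "0 < l"
  shows "orlicz_modular \<Phi> (\<lambda>t. \<Sum>k<m. c k * g k t) l = (\<Sum>k<m. orlicz_modular \<Phi> (\<lambda>t. c k * g k t) l)"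
proof (rule modular_disj_sum)
  show "AE x in I01. \<forall>k<m. \<forall>k'<m. k \<noteq> k' \<longrightarrow> c k * g k x = 0 \<or> c k' * g k' x = 0"
  proof -
    have "AE x in I01. \<forall>n m. n \<noteq> m \<longrightarrow> g n x = 0 \<or> g m x = 0" using assms(1) unfolding good_def by simp
    thus ?thesis by (rule eventually_mono) auto
  qed
  fix k show "(\<lambda>t. c k * g k t) \<in> borel_measurable I01"
    using assms(1) unfolding good_def by (intro borel_measurable_times) auto
qed (use assms in auto)

lemma good_term_upper:
  assumes "good g" "0 < S" "\<bar>c\<bar> \<le> S" "S < l"
  shows "orlicz_modular \<Phi> (\<lambda>t. c * g k t) l \<le> ennreal (\<bar>c\<bar> / S)"
proof (cases "c = 0")
  case True thus ?thesis by (simp add: modular_zero)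
next
  case False
  have g: "g k \<in> borel_measurable I01" "lux_norm \<Phi> (g k) = 1" "\<exists>l>0. orlicz_modular \<Phi> (g k) l \<le> 1"
    using assms(1) unfolding good_def by auto
  have l': "1 < l / S" using assms by simp
  have le: "l / S \<le> l / \<bar>c\<bar>" using assms False by (intro divide_left_mono) auto
  have "orlicz_modular \<Phi> (\<lambda>t. c * g k t) l = orlicz_modular \<Phi> (g k) (l / \<bar>c\<bar>)"
    using False assms by (intro modular_cmult) auto
  also have "\<dots> \<le> ennreal ((l/S) / (l/\<bar>c\<bar>)) * orlicz_modular \<Phi> (g k) (l/S)"
    using l' le g by (intro modular_scale) auto
  also have "\<dots> \<le> ennreal ((l/S) / (l/\<bar>c\<bar>)) * 1"
    using norm1_le[OF g(2) l' g(3)] by (intro mult_left_mono) auto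
  also have "(l/S) / (l/\<bar>c\<bar>) = \<bar>c\<bar> / S" using assms False by (simp add: field_simps)
  finally show ?thesis by simp
qed

lemma good_upper:
  assumes "good g" "(\<Sum>k<m. \<bar>c k\<bar>) < l"
  shows "orlicz_modular \<Phi> (\<lambda>t. \<Sum>k<m. c k * g k t) l \<le> 1"
proof -
  define S where "S = (\<Sum>k<m. \<bar>c k\<bar>)"
  have S0: "0 \<le> S" unfolding S_def by (auto intro: sum_nonneg)
  have l: "0 < l" using assms S0 unfolding S_def by linarith
  show ?thesis
  proof (cases "S = 0")
    case True
    hence "\<forall>k<m. c k = 0" unfolding S_def by (subst (asm) sum_nonneg_eq_0_iff) auto
    thus ?thesis using good_sum_split[OF assms(1) l] by (simp add: modular_zero)
  next
    case False
    hence S: "0 < S" using S0 by simp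
    have "orlicz_modular \<Phi> (\<lambda>t. \<Sum>k<m. c k * g k t) l = (\<Sum>k<m. orlicz_modular \<Phi> (\<lambda>t. c k * g k t) l)"
      by (rule good_sum_split[OF assms(1) l])
    also have "\<dots> \<le> (\<Sum>k<m. ennreal (\<bar>c k\<bar> / S))"
    proof (rule sum_mono)
      fix k assume "k \<in> {..<m}"
      hence "\<bar>c k\<bar> \<le> S" unfolding S_def by (intro member_le_sum) auto
      thus "orlicz_modular \<Phi> (\<lambda>t. c k * g k t) l \<le> ennreal (\<bar>c k\<bar> / S)"
        using good_term_upper[OF assms(1) S _ ] assms S_def by auto
    qed
    also have "\<dots> = ennreal (\<Sum>k<m. \<bar>c k\<bar> / S)" by (rule sum_ennreal) (use S in auto)
    also have "(\<Sum>k<m. \<bar>c k\<bar> / S) = 1" using S unfolding S_def by (simp add: sum_divide_distrib[symmetric])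
    finally show ?thesis by simp
  qed
qed

lemma good_norm_upper:
  assumes "good g"
  shows "lux_norm \<Phi> (\<lambda>t. \<Sum>k<m. c k * g k t) \<le> (\<Sum>k<m. \<bar>c k\<bar>)"
  by (rule lux_le) (use good_upper[OF assms] in \<open>auto intro: sum_nonneg\<close>)

lemma good_term_lower:
  assumes "good g" "0 < l" "c \<noteq> 0" "l * (1/2)^k \<le> \<bar>c\<bar>" "0 < \<kappa>"
    and low: "ennreal (\<kappa> * (1/2)^k) \<le> orlicz_modular \<Phi> (g k) (2^k)"
  shows "ennreal (\<kappa> * \<bar>c\<bar> / l) \<le> orlicz_modular \<Phi> (\<lambda>t. c * g k t) l"
proof -
  have g: "g k \<in> borel_measurable I01" using assms(1) unfolding good_def by auto
  define B where "B = orlicz_modular \<Phi> (g k) (l / \<bar>c\<bar>)"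
  have eqB: "orlicz_modular \<Phi> (\<lambda>t. c * g k t) l = B"
    unfolding B_def using assms by (intro modular_cmult) auto
  have p: "(1/2::real)^k * 2^k = 1" by (simp add: power_mult_distrib[symmetric])
  have le: "l / \<bar>c\<bar> \<le> 2^k"
  proof -
    have "l = l * (1/2)^k * 2^k" using p by (simp add: mult.assoc)
    also have "\<dots> \<le> \<bar>c\<bar> * 2^k" using assms(4) by (intro mult_right_mono) auto
    finally show ?thesis using assms(3) by (simp add: divide_le_eq mult.commute)
  qed
  have "ennreal (\<kappa> * (1/2)^k) \<le> ennreal ((l/\<bar>c\<bar>) / 2^k) * B"
    using low modular_scale[OF _ le g] assms unfolding B_def by (meson divide_pos_pos order_trans zero_less_abs_iff)
  show ?thesis
  proof (cases B)
    case (real b)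
    hence b0: "0 \<le> b" by simp
    have r0: "0 \<le> (l/\<bar>c\<bar>) / 2^k" using assms by simp
    have "ennreal ((l/\<bar>c\<bar>) / 2^k) * B = ennreal ((l/\<bar>c\<bar>) / 2^k * b)"
      unfolding real by (rule ennreal_mult[symmetric, OF r0 b0])
    with \<open>ennreal (\<kappa> * (1/2)^k) \<le> ennreal ((l/\<bar>c\<bar>) / 2^k) * B\<close>
    have E: "ennreal (\<kappa> * (1/2)^k) \<le> ennreal ((l/\<bar>c\<bar>) / 2^k * b)" by simp
    have "\<kappa> * (1/2)^k \<le> (l/\<bar>c\<bar>) / 2^k * b"
      by (rule ennreal_le_iff[THEN iffD1, OF mult_nonneg_nonneg[OF r0 b0] E])
    hence "\<kappa> * (1/2)^k * 2^k \<le> (l/\<bar>c\<bar>) / 2^k * b * 2^k" by (intro mult_right_mono) auto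
    hence "\<kappa> \<le> (l/\<bar>c\<bar>) * b" using p by (simp add: mult.assoc)
    hence "\<kappa> * \<bar>c\<bar> / l \<le> b" using assms by (simp add: field_simps)
    thus ?thesis unfolding eqB real by (simp add: ennreal_leI)
  next
    case top thus ?thesis unfolding eqB by simp
  qed
qed

lemma geom_half: "(\<Sum>k<m. (1/2::real)^k) \<le> 2"
proof -
  have "(\<Sum>k<m. (1/2::real)^k) = 2 - 2 * (1/2)^m"
    by (induct m) (auto simp: algebra_simps)
  thus ?thesis by simp
qed

lemma good_lower:
  assumes "good g" "0 < \<kappa>" and low: "\<And>k. ennreal (\<kappa> * (1/2)^k) \<le> orlicz_modular \<Phi> (g k) (2^k)"
  shows "(\<kappa> / (1 + 2*\<kappa>)) * (\<Sum>k<m. \<bar>c k\<bar>) \<le> lux_norm \<Phi> (\<lambda>t. \<Sum>k<m. c k * g k t)"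
proof (rule lux_ge)
  define S where "S = (\<Sum>k<m. \<bar>c k\<bar>)"
  have S0: "0 \<le> S" unfolding S_def by (auto intro: sum_nonneg)
  show "\<exists>l>0. orlicz_modular \<Phi> (\<lambda>t. \<Sum>k<m. c k * g k t) l \<le> 1"
    using good_upper[OF assms(1), where m=m and c=c and l="S+1"] S0 unfolding S_def by (intro exI[of _ "S+1"]) (auto simp: S_def add_nonneg_pos)
  fix l assume l: "0 < l" "l < \<kappa> / (1 + 2*\<kappa>) * (\<Sum>k<m. \<bar>c k\<bar>)"
  define G where "G = {k\<in>{..<m}. l * (1/2)^k \<le> \<bar>c k\<bar>}"
  have "(\<Sum>k\<in>G. ennreal (\<kappa> * \<bar>c k\<bar> / l)) \<le> (\<Sum>k\<in>G. orlicz_modular \<Phi> (\<lambda>t. c k * g k t) l)"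
  proof (rule sum_mono)
    fix k assume k: "k \<in> G"
    show "ennreal (\<kappa> * \<bar>c k\<bar> / l) \<le> orlicz_modular \<Phi> (\<lambda>t. c k * g k t) l"
    proof (cases "c k = 0")
      case True thus ?thesis by simp
    next
      case False
      thus ?thesis using good_term_lower[OF assms(1) l(1) False _ assms(2) low] k unfolding G_def by auto
    qed
  qed
  also have "\<dots> \<le> (\<Sum>k<m. orlicz_modular \<Phi> (\<lambda>t. c k * g k t) l)"
    by (rule sum_mono2) (auto simp: G_def)
  also have "\<dots> = orlicz_modular \<Phi> (\<lambda>t. \<Sum>k<m. c k * g k t) l"
    by (rule good_sum_split[OF assms(1) l(1), symmetric])
  finally have A: "ennreal (\<Sum>k\<in>G. \<kappa> * \<bar>c k\<bar> / l) \<le> orlicz_modular \<Phi> (\<lambda>t. \<Sum>k<m. c k * g k t) l"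
    using assms l by (subst sum_ennreal[symmetric]) auto
  have "(\<Sum>k\<in>{..<m}-G. \<bar>c k\<bar>) \<le> (\<Sum>k\<in>{..<m}-G. l * (1/2)^k)"
    by (rule sum_mono) (auto simp: G_def)
  also have "\<dots> \<le> (\<Sum>k<m. l * (1/2)^k)" using l by (intro sum_mono2) auto
  also have "\<dots> = l * (\<Sum>k<m. (1/2)^k)" by (simp add: sum_distrib_left)
  also have "\<dots> \<le> l * 2" using geom_half l by (intro mult_left_mono) auto
  finally have R: "(\<Sum>k\<in>{..<m}-G. \<bar>c k\<bar>) \<le> 2 * l" by simp
  have "S = (\<Sum>k\<in>G. \<bar>c k\<bar>) + (\<Sum>k\<in>{..<m}-G. \<bar>c k\<bar>)"
    unfolding S_def by (metis (no_types, lifting) G_def finite_lessThan mem_Collect_eq subsetI sum.subset_diff add.commute)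
  hence SG: "S - 2 * l \<le> (\<Sum>k\<in>G. \<bar>c k\<bar>)" using R by linarith
  have "l * (1 + 2*\<kappa>) < \<kappa> * S" using l assms(2) unfolding S_def by (simp add: field_simps)
  hence "1 < \<kappa> * (S - 2*l) / l" using l assms(2) by (simp add: field_simps)
  also have "\<kappa> * (S - 2*l) / l \<le> \<kappa> * (\<Sum>k\<in>G. \<bar>c k\<bar>) / l"
    using SG l assms(2) by (intro divide_right_mono mult_left_mono) auto
  also have "\<dots> = (\<Sum>k\<in>G. \<kappa> * \<bar>c k\<bar> / l)" by (simp add: sum_distrib_left sum_divide_distrib)
  finally have X: "1 < (\<Sum>k\<in>G. \<kappa> * \<bar>c k\<bar> / l)" .
  hence "1 < ennreal (\<Sum>k\<in>G. \<kappa> * \<bar>c k\<bar> / l)" by (metis ennreal_1 ennreal_less_iff zero_le_one)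
  with A show "1 < orlicz_modular \<Phi> (\<lambda>t. \<Sum>k<m. c k * g k t) l" by order
qed

lemma good_l1:
  assumes "good g" "0 < \<kappa>" and low: "\<And>k. ennreal (\<kappa> * (1/2)^k) \<le> orlicz_modular \<Phi> (g k) (2^k)"
  shows "\<exists>C>0. l1_equiv \<Phi> g C"
proof (intro exI conjI)
  define C where "C = max 1 ((1 + 2*\<kappa>) / \<kappa>)"
  show "0 < C" unfolding C_def by simp
  show "l1_equiv \<Phi> g C" unfolding l1_equiv_def
  proof (intro allI conjI)
    fix m and c :: "nat \<Rightarrow> real"
    have S0: "0 \<le> (\<Sum>k<m. \<bar>c k\<bar>)" by (auto intro: sum_nonneg)
    have "1/C \<le> \<kappa> / (1 + 2*\<kappa>)" unfolding C_def using assms(2)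
      by (simp add: field_simps max_def)
    hence "(1/C) * (\<Sum>k<m. \<bar>c k\<bar>) \<le> (\<kappa> / (1 + 2*\<kappa>)) * (\<Sum>k<m. \<bar>c k\<bar>)"
      using S0 by (intro mult_right_mono) auto
    also have "\<dots> \<le> lux_norm \<Phi> (\<lambda>t. \<Sum>k<m. c k * g k t)" by (rule good_lower[OF assms])
    finally show "(1/C) * (\<Sum>k<m. \<bar>c k\<bar>) \<le> lux_norm \<Phi> (\<lambda>t. \<Sum>k<m. c k * g k t)" .
    have "lux_norm \<Phi> (\<lambda>t. \<Sum>k<m. c k * g k t) \<le> (\<Sum>k<m. \<bar>c k\<bar>)" by (rule good_norm_upper[OF assms(1)])
    also have "\<dots> \<le> C * (\<Sum>k<m. \<bar>c k\<bar>)" using S0 unfolding C_def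
      by (metis max.cobounded1 mult_le_cancel_right1 not_less)
    finally show "lux_norm \<Phi> (\<lambda>t. \<Sum>k<m. c k * g k t) \<le> C * (\<Sum>k<m. \<bar>c k\<bar>)" .
  qed
qed

end

definition qq :: "nat \<Rightarrow> nat" where "qq j = fst (prod_decode j) + 1"
definition aa :: "nat \<Rightarrow> nat" where "aa j = 4^(j+1)"
definition Cl :: "nat \<Rightarrow> nat set" where "Cl j = (\<lambda>i. aa j + qq j * i) ` {1..qq j}"
definition EE :: "nat set" where "EE = (\<Union>j. Cl j)"

lemma qq_le: "qq j \<le> j + 1"
proof -
  obtain a b where ab: "prod_decode j = (a, b)" by (cases "prod_decode j")
  have "prod_encode (a, b) = j" using prod_decode_inverse[of j] ab by simp
  moreover have "a \<le> prod_encode (a, b)" by (rule le_prod_encode_1)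
  ultimately show ?thesis unfolding qq_def ab by simp
qed

lemma qq_pos: "1 \<le> qq j" unfolding qq_def by simp

lemma qq_encode: "qq (prod_encode (q, n)) = q + 1" unfolding qq_def by simp

lemma prod_encode_smono: "strict_mono (\<lambda>n. prod_encode (q, n))"
proof (rule strict_monoI_Suc)
  fix n show "prod_encode (q, n) < prod_encode (q, Suc n)"
    unfolding prod_encode_def by (simp add: triangle_def)
qed

lemma Cl_bounds: "e \<in> Cl j \<Longrightarrow> aa j < e \<and> e \<le> aa j + qq j * qq j"
  unfolding Cl_def using qq_pos[of j] by auto

lemma finite_Cl: "finite (Cl j)" unfolding Cl_def by simp

lemma card_Cl: "card (Cl j) = qq j"
proof -
  have "inj_on (\<lambda>i. aa j + qq j * i) {1..qq j}" using qq_pos[of j] by (intro inj_onI) auto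
  thus ?thesis unfolding Cl_def by (simp add: card_image)
qed

lemma aa_smono: "strict_mono aa"
  unfolding aa_def by (rule strict_monoI_Suc) simp

lemma aa_ge: "j < aa j"
proof -
  have "j < 2^j" by (rule less_exp)
  also have "(2::nat)^j \<le> 4^j" by (rule power_mono) auto
  also have "(4::nat)^j \<le> 4^(j+1)" by simp
  finally show ?thesis unfolding aa_def .
qed

lemma poly_bound: "n*n + n + 1 \<le> 3 * 4^n"
proof (induct n)
  case 0 thus ?case by simp
next
  case (Suc n)
  have "Suc n * Suc n + Suc n + 1 \<le> 3 * (n*n + n + 1)" by simp
  also have "\<dots> \<le> 3 * (3 * 4^n)" using Suc by simp
  also have "\<dots> \<le> 3 * 4^Suc n" by simp
  finally show ?case .
qed

lemma gap1: assumes "e \<in> Cl j'" shows "e + (j'+1) + 1 \<le> aa (j'+1)"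
proof -
  have "e \<le> aa j' + qq j' * qq j'" using Cl_bounds[OF assms] by simp
  also have "\<dots> \<le> aa j' + (j'+1)*(j'+1)" using qq_le[of j'] by (intro add_left_mono mult_mono) auto
  finally have "e + (j'+1) + 1 \<le> 4^(j'+1) + ((j'+1)*(j'+1) + (j'+1) + 1)" unfolding aa_def by simp
  also have "\<dots> \<le> 4^(j'+1) + 3 * 4^(j'+1)" using poly_bound[of "j'+1"] by simp
  also have "\<dots> = aa (j'+1)" unfolding aa_def by simp
  finally show ?thesis .
qed

lemma gap: assumes "e \<in> Cl j'" "j' < j" shows "e + j + 1 \<le> aa j"
proof -
  have "\<forall>d. e + (j'+1+d) + 1 \<le> aa (j'+1+d)"
  proof
    fix d show "e + (j'+1+d) + 1 \<le> aa (j'+1+d)"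
    proof (induct d)
      case 0 thus ?case using gap1[OF assms(1)] by simp
    next
      case (Suc d)
      have "aa (j'+1+d) + 1 \<le> aa (j'+1+Suc d)" using aa_smono by (simp add: strict_mono_def Suc_le_eq)
      thus ?case using Suc by simp
    qed
  qed
  moreover obtain d where "j = Suc (j' + d)" using assms(2) less_iff_Suc_add by auto
  hence "j = j'+1+d" by simp
  ultimately show ?thesis by blast
qed

lemma EE_cases: "e \<in> EE \<Longrightarrow> \<exists>j. e \<in> Cl j" unfolding EE_def by auto

lemma pow_le_exp: "(2::real)^a \<le> 2^b \<Longrightarrow> a \<le> b"
  by (simp add: power_le_imp_le_exp)

lemma exists_interval: assumes "(2::real)^(aa 0) \<le> s"
  shows "\<exists>j. (2::real)^(aa j) \<le> s \<and> s < 2^(aa (j+1))"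
proof -
  obtain n where n: "s < (2::real)^n" using real_arch_pow[of 2 s] by auto
  have "(2::real)^n \<le> 2^(aa (n+1))" using aa_ge[of "n+1"] by (intro power_increasing) auto
  hence "s < (2::real)^(aa (n+1))" using n by linarith
  hence ex: "\<exists>j. s < (2::real)^(aa (j+1))" by blast
  define j where "j = (LEAST j. s < (2::real)^(aa (j+1)))"
  have j1: "s < 2^(aa (j+1))" unfolding j_def by (rule LeastI_ex[OF ex])
  have "(2::real)^(aa j) \<le> s"
  proof (cases j)
    case 0 thus ?thesis using assms by simp
  next
    case (Suc j0)
    have "j0 < j" using Suc by simp
    hence "\<not> s < (2::real)^(aa (j0+1))" unfolding j_def by (rule not_less_Least)
    thus ?thesis using Suc by simp
  qed
  with j1 show ?thesis by auto
qed

definition Win :: "real \<Rightarrow> real \<Rightarrow> nat set" where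
  "Win t s = {e\<in>EE. t * s / 4 \<le> 2^e \<and> (2::real)^e < s}"

lemma window_in_cluster:
  assumes t: "0 < t" "t \<le> 1" and J: "4 / t \<le> (2::real)^J" and sJ: "(2::real)^(aa J) \<le> s"
    and j: "(2::real)^(aa j) \<le> s" "s < 2^(aa (j+1))"
  shows "Win t s \<subseteq> Cl j"
proof
  fix e assume e: "e \<in> Win t s"
  hence eE: "e \<in> EE" and lo: "t * s / 4 \<le> 2^e" and hi: "(2::real)^e < s" unfolding Win_def by auto
  obtain j' where j': "e \<in> Cl j'" using EE_cases[OF eE] by auto
  show "e \<in> Cl j"
  proof (cases "j' = j")
    case True thus ?thesis using j' by simp
  next
    case False
    show ?thesis
    proof (cases "j < j'")
      case True
      hence "j+1 \<le> j'" by simp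
      hence "aa (j+1) \<le> aa j'" using strict_mono_less_eq[OF aa_smono] by simp
      hence "aa (j+1) < e" using Cl_bounds[OF j'] by simp
      hence "(2::real)^(aa (j+1)) \<le> 2^e" by (intro power_increasing) auto
      hence False using hi j(2) by linarith
      thus ?thesis ..
    next
      case False2: False
      hence jj: "j' < j" using False by simp
      have g: "e + j + 1 \<le> aa j" by (rule gap[OF j' jj])
      have "(2::real)^(aa J) < 2^(aa (j+1))" using sJ j(2) by linarith
      hence "aa J < aa (j+1)" by (simp add: power_less_imp_less_exp)
      hence "J < j+1" using strict_mono_less[OF aa_smono] by simp
      hence Jj: "J \<le> j" by simp
      have "s \<le> (4 / t) * 2^e" using lo t by (simp add: field_simps)
      also have "\<dots> \<le> 2^J * 2^e" using J by (intro mult_right_mono) auto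
      also have "\<dots> = 2^(J+e)" by (simp add: power_add)
      finally have "s \<le> 2^(J+e)" .
      hence "(2::real)^(aa j) \<le> 2^(J+e)" using j(1) by linarith
      hence "aa j \<le> J + e" by (rule pow_le_exp)
      thus ?thesis using g Jj by simp
    qed
  qed
qed

lemma finite_Win: "finite (Win t s)"
proof -
  have "Win t s \<subseteq> {e\<in>EE. (2::real)^e < s}" unfolding Win_def by auto
  thus ?thesis using finite_low finite_subset by blast
qed

lemma card_Win_le_q:
  assumes "Win t s \<subseteq> Cl j" shows "card (Win t s) \<le> qq j"
  using card_mono[OF finite_Cl assms] card_Cl by simp

lemma card_Win_le_1:
  assumes sub: "Win t s \<subseteq> Cl j" and t: "0 < t" and q: "4 / t \<le> (2::real)^(qq j)"
  shows "card (Win t s) \<le> 1"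
proof -
  have "\<forall>e1\<in>Win t s. \<forall>e2\<in>Win t s. e1 = e2"
  proof (intro ballI, rule ccontr)
    fix e1 e2 assume e1: "e1 \<in> Win t s" and e2: "e2 \<in> Win t s" and ne: "e1 \<noteq> e2"
    have "\<exists>a b. a \<in> Win t s \<and> b \<in> Win t s \<and> a < b"
    proof (cases "e1 < e2")
      case True thus ?thesis using e1 e2 by blast
    next
      case False hence "e2 < e1" using ne by simp
      thus ?thesis using e1 e2 by blast
    qed
    then obtain a b where ab: "a \<in> Win t s" "b \<in> Win t s" "a < b" by auto
    obtain i1 where i1: "a = aa j + qq j * i1" using sub ab(1) unfolding Cl_def by auto
    obtain i2 where i2: "b = aa j + qq j * i2" using sub ab(2) unfolding Cl_def by auto
    have "qq j * i1 < qq j * i2" using ab(3) i1 i2 by simp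
    hence "i1 < i2" by simp
    hence "qq j * (i1 + 1) \<le> qq j * i2" by (intro mult_le_mono2) simp
    hence "a + qq j \<le> b" using i1 i2 by (simp add: algebra_simps)
    hence "(2::real)^(a + qq j) \<le> 2^b" by (intro power_increasing) auto
    moreover have "t * s / 4 \<le> 2^a" and "(2::real)^b < s" using ab unfolding Win_def by auto
    moreover have "s \<le> (t * s / 4) * (4/t)" using t by (simp add: field_simps)
    moreover have "(t * s / 4) * (4/t) \<le> 2^a * (4/t)"
      using \<open>t * s / 4 \<le> 2^a\<close> t by (intro mult_right_mono) auto
    moreover have "(2::real)^a * (4/t) \<le> 2^a * 2^(qq j)" using q by (intro mult_left_mono) auto
    ultimately have "s \<le> 2^a * 2^(qq j)" by linarith
    hence "s \<le> 2^b" using \<open>(2::real)^(a + qq j) \<le> 2^b\<close> by (simp add: power_add)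
    thus False using \<open>(2::real)^b < s\<close> by simp
  qed
  thus ?thesis using card_le_Suc0_iff_eq[OF finite_Win] by simp
qed


abbreviation "Phi0 \<equiv> PhiE EE"

lemma Phi0_subhom: "0 \<le> t \<Longrightarrow> t \<le> 1 \<Longrightarrow> 0 \<le> x \<Longrightarrow> Phi0 (t * x) \<le> t * Phi0 x"
  using convex_onD[OF PhiE_convex, of t 0 x] by simp

interpretation P0: orl Phi0
  by unfold_locales (auto simp: PhiE_mono Phi0_subhom)

lemma NN_split: assumes "x \<le> s"
  shows "NN E s = NN E x + card {e\<in>E. x \<le> 2^e \<and> (2::real)^e < s}"
proof -
  have "{e\<in>E. (2::real)^e < s} = {e\<in>E. (2::real)^e < x} \<union> {e\<in>E. x \<le> 2^e \<and> (2::real)^e < s}"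
    using assms by auto
  moreover have "finite {e\<in>E. x \<le> 2^e \<and> (2::real)^e < s}"
    by (rule finite_subset[OF _ finite_low[of E s]]) auto
  ultimately show ?thesis unfolding NN_def
    by (subst card_Un_disjoint[symmetric]) (auto intro: finite_low)
qed

lemma PW: assumes y: "0 \<le> y" and t: "0 < t" "t \<le> 1" and W: "card (Win t (2*y)) \<le> G"
  shows "(t/4) * (1/2)^G * Phi0 (2*y) \<le> Phi0 (t*y)"
proof -
  define x where "x = t*y/2"
  have ty: "t*y \<le> 1*y" using t y by (intro mult_right_mono) auto
  have ty0: "0 \<le> t*y" using t y by simp
  have x0: "0 \<le> x" "x \<le> t*y" "x \<le> 2*y" using ty ty0 unfolding x_def by auto
  have Weq: "Win t (2*y) = {e\<in>EE. x \<le> 2^e \<and> (2::real)^e < 2*y}" unfolding Win_def x_def by simp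
  have N: "NN EE (2*y) = NN EE x + card (Win t (2*y))" unfolding Weq by (rule NN_split) (use x0 in simp)
  define W where "W = card (Win t (2*y))"
  have "(1/2::real)^G * 2^W \<le> 1"
  proof -
    have "(1/2::real)^G * 2^W \<le> (1/2)^W * 2^W" using W unfolding W_def by (intro mult_right_mono power_decreasing) auto
    also have "\<dots> = 1" by (simp add: power_mult_distrib[symmetric])
    finally show ?thesis .
  qed
  have "(t/4) * (1/2)^G * Phi0 (2*y) \<le> (t/4) * (1/2)^G * (2*y * 2^(NN EE (2*y)))"
    using PhiE_upper[of "2*y" EE] y t by (intro mult_left_mono) auto
  also have "\<dots> = (t*y/2) * 2^(NN EE x) * ((1/2)^G * 2^W)" unfolding N W_def by (simp add: power_add)
  also have "\<dots> \<le> (t*y/2) * 2^(NN EE x) * 1" using \<open>(1/2::real)^G * 2^W \<le> 1\<close> y t by (intro mult_left_mono) auto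
  also have "\<dots> = (t*y - x) * 2^(NN EE x)" unfolding x_def by simp
  also have "\<dots> \<le> Phi0 (t*y)" by (rule PhiE_lower) (use x0 in auto)
  finally show ?thesis .
qed

definition mm :: "(real \<Rightarrow> real) \<Rightarrow> real set \<Rightarrow> ennreal" where
  "mm f A = (\<integral>\<^sup>+ x. ennreal (Phi0 (2*\<bar>f x\<bar>)) * indicator A (2*\<bar>f x\<bar>) \<partial>I01)"

lemma mm_meas: assumes f: "(f::real\<Rightarrow>real) \<in> borel_measurable I01" and A: "A \<in> sets borel"
  shows "(\<lambda>x. ennreal (Phi0 (2*\<bar>f x\<bar>)) * indicator A (2*\<bar>f x\<bar>)) \<in> borel_measurable I01"
proof -
  have 1: "(\<lambda>x. 2*\<bar>f x\<bar>) \<in> borel_measurable I01" using f by (intro borel_measurable_times borel_measurable_abs) auto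
  have 2: "(indicator A :: real \<Rightarrow> ennreal) \<in> borel_measurable borel" using A by (rule borel_measurable_indicator)
  have 3: "(\<lambda>x. indicator A (2*\<bar>f x\<bar>) :: ennreal) \<in> borel_measurable I01" using measurable_compose[OF 1 2] by (simp add: o_def)
  have 4: "(\<lambda>x. ennreal (Phi0 (\<bar>f x\<bar> / (1/2)))) \<in> borel_measurable I01" by (rule P0.meas_mod[OF f])
  show ?thesis using borel_measurable_times_ennreal[OF 4 3] by (simp add: mult.commute)
qed

lemma mm_UNIV: "mm f UNIV = orlicz_modular Phi0 f (1/2)"
  unfolding mm_def orlicz_modular_def by (simp add: mult.commute)

lemma mm_split: assumes f: "f \<in> borel_measurable I01" and B: "B \<in> sets borel" and C: "C \<in> sets borel"
  and sub: "A \<subseteq> B \<union> C"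
  shows "mm f A \<le> mm f B + mm f C"
proof -
  have "mm f A \<le> (\<integral>\<^sup>+ x. ennreal (Phi0 (2*\<bar>f x\<bar>)) * indicator B (2*\<bar>f x\<bar>) + ennreal (Phi0 (2*\<bar>f x\<bar>)) * indicator C (2*\<bar>f x\<bar>) \<partial>I01)"
    unfolding mm_def
  proof (rule nn_integral_mono)
    fix x show "ennreal (Phi0 (2*\<bar>f x\<bar>)) * indicator A (2*\<bar>f x\<bar>) \<le> ennreal (Phi0 (2*\<bar>f x\<bar>)) * indicator B (2*\<bar>f x\<bar>) + ennreal (Phi0 (2*\<bar>f x\<bar>)) * indicator C (2*\<bar>f x\<bar>)"
      using sub by (auto simp: indicator_def)
  qed
  also have "\<dots> = mm f B + mm f C" unfolding mm_def
    by (rule nn_integral_add) (use mm_meas f B C in auto)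
  finally show ?thesis .
qed

lemma mm_mono: assumes "A \<subseteq> B" shows "mm f A \<le> mm f B"
  unfolding mm_def by (rule nn_integral_mono) (use assms in \<open>auto simp: indicator_def\<close>)

lemma mm_key: assumes f: "f \<in> borel_measurable I01" and A: "A \<in> sets borel" and t: "0 < t" "t \<le> 1"
  and W: "\<And>s. s \<in> A \<Longrightarrow> card (Win t s) \<le> G"
  shows "ennreal ((t/4) * (1/2)^G) * mm f A \<le> orlicz_modular Phi0 f (1/t)"
proof -
  have "ennreal ((t/4) * (1/2)^G) * mm f A = (\<integral>\<^sup>+ x. ennreal ((t/4) * (1/2)^G) * (ennreal (Phi0 (2*\<bar>f x\<bar>)) * indicator A (2*\<bar>f x\<bar>)) \<partial>I01)"
    unfolding mm_def by (rule nn_integral_cmult[symmetric]) (rule mm_meas[OF f A])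
  also have "\<dots> \<le> (\<integral>\<^sup>+ x. ennreal (Phi0 (\<bar>f x\<bar> / (1/t))) \<partial>I01)"
  proof (rule nn_integral_mono)
    fix x
    show "ennreal ((t/4) * (1/2)^G) * (ennreal (Phi0 (2*\<bar>f x\<bar>)) * indicator A (2*\<bar>f x\<bar>)) \<le> ennreal (Phi0 (\<bar>f x\<bar> / (1/t)))"
    proof (cases "2*\<bar>f x\<bar> \<in> A")
      case True
      have "(t/4) * (1/2)^G * Phi0 (2*\<bar>f x\<bar>) \<le> Phi0 (t*\<bar>f x\<bar>)"
        by (rule PW) (use t W[OF True] in auto)
      moreover have "ennreal ((t/4) * (1/2)^G) * ennreal (Phi0 (2*\<bar>f x\<bar>)) = ennreal ((t/4) * (1/2)^G * Phi0 (2*\<bar>f x\<bar>))"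
        by (rule ennreal_mult[symmetric]) (use t PhiE_nonneg in auto)
      ultimately show ?thesis using True by (simp add: ennreal_leI mult.commute)
    next
      case False thus ?thesis by simp
    qed
  qed
  finally show ?thesis unfolding orlicz_modular_def .
qed


lemma I01_space: "emeasure I01 {0..1} = 1"
  by (simp add: emeasure_restrict_space)

lemma ennreal_split: fixes a h k :: ennreal
  assumes "1 < a + (h+k)" "a \<le> ennreal (1/4)" "h < ennreal (1/4)" shows "ennreal (1/2) \<le> k"
proof (rule ccontr)
  assume "\<not> ennreal (1/2) \<le> k" hence k: "k < ennreal (1/2)" by simp
  obtain ar where a: "a = ennreal ar" "0 \<le> ar" using assms(2) by (cases a) (auto simp: top_unique)
  obtain hr where h: "h = ennreal hr" "0 \<le> hr" using assms(3) by (cases h) auto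
  obtain kr where kk: "k = ennreal kr" "0 \<le> kr" using k by (cases k) auto
  have "ar \<le> 1/4" "hr < 1/4" using assms a h by (auto simp: ennreal_le_iff ennreal_less_iff)
  moreover have "ennreal kr < ennreal (1/2)" using k unfolding kk(1) .
  hence "kr < 1/2" using ennreal_less_iff[OF kk(2)] by blast
  moreover have "a + (h+k) = ennreal (ar + (hr+kr))" using a h kk by simp
  hence "1 < ennreal (ar + (hr+kr))" using assms(1) by simp
  hence "1 < ar + (hr + kr)" by (metis ennreal_1 ennreal_less_iff zero_le_one)
  ultimately show False by linarith
qed

lemma sum_ind_le1:
  fixes f :: "nat \<Rightarrow> 'a \<Rightarrow> real" and K :: nat
  assumes "\<forall>n m. n \<noteq> m \<longrightarrow> f n x = 0 \<or> f m x = (0::real)"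
  shows "(\<Sum>n<K. indicator {x. f n x \<noteq> 0} x :: ennreal) \<le> 1"
proof (cases "\<exists>n0<K. f n0 x \<noteq> 0")
  case True
  then obtain n0 where n0: "n0 < K" "f n0 x \<noteq> 0" by auto
  have z: "\<And>n. n \<noteq> n0 \<Longrightarrow> f n x = 0" using assms n0 by blast
  have "(\<Sum>n<K. indicator {x. f n x \<noteq> 0} x :: ennreal) = indicator {x. f n0 x \<noteq> 0} x + (\<Sum>n\<in>{..<K}-{n0}. indicator {x. f n x \<noteq> 0} x)"
    using n0 by (intro sum.remove) auto
  also have "(\<Sum>n\<in>{..<K}-{n0}. indicator {x. f n x \<noteq> 0} x :: ennreal) = 0" using z by (intro sum.neutral) auto
  finally show ?thesis by (simp add: indicator_def)
next
  case False
  hence "(\<Sum>n<K. indicator {x. f n x \<noteq> 0} x :: ennreal) = 0" by (intro sum.neutral) auto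
  thus ?thesis by simp
qed

lemma supp_to_zero:
  fixes f :: "nat \<Rightarrow> real \<Rightarrow> real"
  assumes meas: "\<And>n. f n \<in> borel_measurable I01"
    and ae: "AE x in I01. \<forall>n m. n \<noteq> m \<longrightarrow> f n x = 0 \<or> f m x = 0"
  shows "(\<lambda>n. measure I01 {x\<in>space I01. f n x \<noteq> 0}) \<longlonglongrightarrow> 0"
proof -
  define A where "A n = {x\<in>space I01. f n x \<noteq> 0}" for n
  have A: "A n \<in> sets I01" for n unfolding A_def using meas[of n] by measurable
  have fin: "finite_measure I01" by (rule finite_measure_lebesgue_on) simp
  have bound: "(\<Sum>n<K. measure I01 (A n)) \<le> 1" for K
  proof -
    have "(\<Sum>n<K. emeasure I01 (A n)) = (\<Sum>n<K. \<integral>\<^sup>+ x. indicator {x. f n x \<noteq> 0} x \<partial>I01)"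
    proof (rule sum.cong[OF refl])
      fix n
      have "emeasure I01 (A n) = (\<integral>\<^sup>+ x. indicator (A n) x \<partial>I01)" using A by simp
      also have "\<dots> = (\<integral>\<^sup>+ x. indicator {x. f n x \<noteq> 0} x \<partial>I01)"
        by (rule nn_integral_cong) (auto simp: A_def indicator_def)
      finally show "emeasure I01 (A n) = (\<integral>\<^sup>+ x. indicator {x. f n x \<noteq> 0} x \<partial>I01)" .
    qed
    also have "\<dots> = (\<integral>\<^sup>+ x. (\<Sum>n<K. indicator {x. f n x \<noteq> 0} x) \<partial>I01)"
    proof (rule nn_integral_sum[symmetric])
      fix n
      show "(\<lambda>x. indicator {x. f n x \<noteq> 0} x :: ennreal) \<in> borel_measurable I01"
        using meas[of n] by measurable
    qed
    also have "\<dots> \<le> (\<integral>\<^sup>+ x. 1 \<partial>I01)"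
    proof (rule nn_integral_mono_AE)
      show "AE x in I01. (\<Sum>n<K. indicator {x. f n x \<noteq> 0} x :: ennreal) \<le> 1"
        using ae by (rule eventually_mono) (rule sum_ind_le1)
    qed
    also have "\<dots> = 1" using I01_space by simp
    finally have "(\<Sum>n<K. emeasure I01 (A n)) \<le> 1" .
    moreover have "(\<Sum>n<K. emeasure I01 (A n)) = ennreal (\<Sum>n<K. measure I01 (A n))"
      using finite_measure.emeasure_eq_measure[OF fin] by (simp add: sum_ennreal)
    ultimately have "ennreal (\<Sum>n<K. measure I01 (A n)) \<le> ennreal 1" by simp
    thus ?thesis by (subst (asm) ennreal_le_iff) auto
  qed
  have "summable (\<lambda>n. measure I01 (A n))"
    by (rule summableI_nonneg_bounded[where x=1]) (use bound in auto)
  thus ?thesis unfolding A_def by (rule summable_LIMSEQ_zero)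
qed

lemma low_mass:
  fixes f :: "nat \<Rightarrow> real \<Rightarrow> real"
  assumes meas: "\<And>n. f n \<in> borel_measurable I01"
    and ae: "AE x in I01. \<forall>n m. n \<noteq> m \<longrightarrow> f n x = 0 \<or> f m x = 0"
    and S: "0 \<le> S" and eps: "0 < \<epsilon>"
  shows "\<exists>N. \<forall>n\<ge>N. mm (f n) {..<S} \<le> ennreal \<epsilon>"
proof -
  define A where "A n = {x\<in>space I01. f n x \<noteq> 0}" for n
  have A: "A n \<in> sets I01" for n unfolding A_def using meas[of n] by measurable
  have fin: "finite_measure I01" by (rule finite_measure_lebesgue_on) simp
  have P0: "0 \<le> Phi0 S" using PhiE_nonneg S by auto
  have lim: "(\<lambda>n. measure I01 (A n)) \<longlonglongrightarrow> 0" unfolding A_def by (rule supp_to_zero[OF meas ae])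
  have "0 < \<epsilon> / (Phi0 S + 1)" using eps P0 by simp
  from order_tendstoD(2)[OF lim this] obtain N where N: "\<And>n. n \<ge> N \<Longrightarrow> measure I01 (A n) < \<epsilon> / (Phi0 S + 1)"
    unfolding eventually_sequentially by auto
  show ?thesis
  proof (intro exI allI impI)
    fix n assume n: "N \<le> n"
    have "mm (f n) {..<S} \<le> (\<integral>\<^sup>+ x. ennreal (Phi0 S) * indicator (A n) x \<partial>I01)"
      unfolding mm_def
    proof (rule nn_integral_mono_AE, rule AE_I2)
      fix x assume x: "x \<in> space I01"
      show "ennreal (Phi0 (2*\<bar>f n x\<bar>)) * indicator {..<S} (2*\<bar>f n x\<bar>) \<le> ennreal (Phi0 S) * indicator (A n) x"
      proof (cases "f n x = 0")
        case True thus ?thesis by simp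
      next
        case False
        hence xA: "x \<in> A n" using x unfolding A_def by auto
        show ?thesis
        proof (cases "2*\<bar>f n x\<bar> < S")
          case True
          hence "Phi0 (2*\<bar>f n x\<bar>) \<le> Phi0 S" using PhiE_mono[of EE] by (simp add: monoD)
          thus ?thesis using xA True by (simp add: ennreal_leI)
        next
          case False thus ?thesis by simp
        qed
      qed
    qed
    also have "\<dots> = ennreal (Phi0 S) * emeasure I01 (A n)" using A by (simp add: nn_integral_cmult_indicator)
    also have "\<dots> = ennreal (Phi0 S * measure I01 (A n))"
      using finite_measure.emeasure_eq_measure[OF fin] P0 by (simp add: ennreal_mult)
    also have "\<dots> \<le> ennreal \<epsilon>"
    proof (rule ennreal_leI)
      have "Phi0 S * measure I01 (A n) \<le> (Phi0 S + 1) * measure I01 (A n)" using P0 by (intro mult_right_mono) auto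
      also have "\<dots> \<le> (Phi0 S + 1) * (\<epsilon> / (Phi0 S + 1))" using N[OF n] P0 by (intro mult_left_mono) auto
      also have "\<dots> = \<epsilon>" using P0 by simp
      finally show "Phi0 S * measure I01 (A n) \<le> \<epsilon>" .
    qed
    finally show "mm (f n) {..<S} \<le> ennreal \<epsilon>" .
  qed
qed

definition Hs :: "nat \<Rightarrow> real set" where
  "Hs Q = (\<Union>j\<in>{j. qq j \<le> Q}. {(2::real)^(aa j)..<2^(aa (j+1))})"
definition Ks :: "nat \<Rightarrow> real set" where
  "Ks Q = (\<Union>j\<in>{j. Q < qq j}. {(2::real)^(aa j)..<2^(aa (j+1))})"

lemma Hs_borel: "Hs Q \<in> sets borel" unfolding Hs_def by (intro sets.countable_UN') auto
lemma Ks_borel: "Ks Q \<in> sets borel" unfolding Ks_def by (intro sets.countable_UN') auto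

lemma cover: assumes "(2::real)^(aa 0) \<le> S" shows "{S..} \<subseteq> Hs Q \<union> Ks Q"
proof
  fix s assume "s \<in> {S..}"
  hence "(2::real)^(aa 0) \<le> s" using assms by simp
  then obtain j where j: "(2::real)^(aa j) \<le> s" "s < 2^(aa (j+1))" using exists_interval by blast
  show "s \<in> Hs Q \<union> Ks Q"
  proof (cases "qq j \<le> Q")
    case True thus ?thesis using j unfolding Hs_def by auto
  next
    case False thus ?thesis using j unfolding Ks_def by auto
  qed
qed

lemma win_H: assumes t: "0 < t" "t \<le> 1" and J: "4 / t \<le> (2::real)^J"
  and s: "s \<in> Hs Q \<inter> {2^(aa J)..}" shows "card (Win t s) \<le> Q"
proof -
  obtain j where j: "qq j \<le> Q" "(2::real)^(aa j) \<le> s" "s < 2^(aa (j+1))" using s unfolding Hs_def by auto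
  have "Win t s \<subseteq> Cl j" by (rule window_in_cluster[OF t J _ j(2,3)]) (use s in auto)
  thus ?thesis using card_Win_le_q j(1) by (meson le_trans)
qed

lemma win_K: assumes t: "0 < t" "t \<le> 1" and J: "4 / t \<le> (2::real)^J" and Q: "4 / t \<le> (2::real)^Q"
  and s: "s \<in> Ks Q \<inter> {2^(aa J)..}" shows "card (Win t s) \<le> 1"
proof -
  obtain j where j: "Q < qq j" "(2::real)^(aa j) \<le> s" "s < 2^(aa (j+1))" using s unfolding Ks_def by auto
  have sub: "Win t s \<subseteq> Cl j" by (rule window_in_cluster[OF t J _ j(2,3)]) (use s in auto)
  have "(2::real)^Q \<le> 2^(qq j)" using j(1) by (intro power_increasing) auto
  hence "4 / t \<le> (2::real)^(qq j)" using Q by linarith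
  thus ?thesis by (rule card_Win_le_1[OF sub t(1)])
qed

lemma t_facts: "0 < (1/2::real)^k" "(1/2::real)^k \<le> 1" "1 / (1/2::real)^k = 2^k"
  by (auto simp: power_le_one power_one_over)

lemma exJ: "\<exists>J. 4 / (1/2::real)^k \<le> (2::real)^J"
  using real_arch_pow[of 2 "4 / (1/2::real)^k"] by (auto intro: less_imp_le)

lemma core:
  fixes f :: "nat \<Rightarrow> real \<Rightarrow> real"
  assumes meas: "\<And>n. f n \<in> borel_measurable I01"
    and ae: "AE x in I01. \<forall>n m. n \<noteq> m \<longrightarrow> f n x = 0 \<or> f m x = 0"
    and norm: "\<And>n. lux_norm Phi0 (f n) = 1"
  shows "\<exists>\<kappa>>0. \<forall>k N. \<exists>n\<ge>N. ennreal (\<kappa> * (1/2)^k) \<le> orlicz_modular Phi0 (f n) (2^k)"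
proof (cases "\<exists>Q. \<forall>S N. \<exists>n\<ge>N. ennreal (1/4) \<le> mm (f n) (Hs Q \<inter> {S..})")
  case True
  then obtain Q where Q: "\<And>S N. \<exists>n\<ge>N. ennreal (1/4) \<le> mm (f n) (Hs Q \<inter> {S..})" by blast
  show ?thesis
  proof (rule exI[where x="(1/2::real)^Q/16"], intro conjI allI)
    show "0 < (1/2::real)^Q / 16" by simp
    fix k N
    define t where "t = (1/2::real)^k"
    have t: "0 < t" "t \<le> 1" "1/t = 2^k" unfolding t_def using t_facts by auto
    obtain J where J: "4 / t \<le> (2::real)^J" using exJ unfolding t_def by blast
    obtain n where n: "n \<ge> N" "ennreal (1/4) \<le> mm (f n) (Hs Q \<inter> {2^(aa J)..})" using Q by blast
    have key: "ennreal ((t/4) * (1/2)^Q) * mm (f n) (Hs Q \<inter> {2^(aa J)..}) \<le> orlicz_modular Phi0 (f n) (1/t)"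
      by (rule mm_key[OF meas _ t(1,2)]) (use Hs_borel win_H[OF t(1,2) J] in auto)
    have "ennreal ((1/2::real)^Q / 16 * (1/2)^k) = ennreal ((t/4) * (1/2)^Q) * ennreal (1/4)"
      unfolding t_def by (simp add: ennreal_mult[symmetric])
    also have "\<dots> \<le> ennreal ((t/4) * (1/2)^Q) * mm (f n) (Hs Q \<inter> {2^(aa J)..})"
      using n(2) by (rule mult_left_mono) simp
    also have "\<dots> \<le> orlicz_modular Phi0 (f n) (2^k)" using key t(3) by simp
    finally show "\<exists>n\<ge>N. ennreal ((1/2::real)^Q / 16 * (1/2)^k) \<le> orlicz_modular Phi0 (f n) (2^k)"
      using n(1) by blast
  qed
next
  case False
  hence B: "\<And>Q. \<exists>S N. \<forall>n\<ge>N. mm (f n) (Hs Q \<inter> {S..}) < ennreal (1/4)"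
    by (metis not_le)
  show ?thesis
  proof (rule exI[where x="1/16::real"], intro conjI allI)
    show "0 < (1/16::real)" by simp
    fix k N0
    define t where "t = (1/2::real)^k"
    have t: "0 < t" "t \<le> 1" "1/t = 2^k" unfolding t_def using t_facts by auto
    obtain J where J: "4 / t \<le> (2::real)^J" using exJ unfolding t_def by blast
    obtain S1 N1 where SN1: "\<And>n. n \<ge> N1 \<Longrightarrow> mm (f n) (Hs J \<inter> {S1..}) < ennreal (1/4)" using B by blast
    define S where "S = max S1 (2^(aa J))"
    have S0: "0 \<le> S" unfolding S_def by (simp add: le_max_iff_disj)
    have SJ: "(2::real)^(aa J) \<le> S" unfolding S_def by simp
    have S00: "(2::real)^(aa 0) \<le> S"
      using SJ strict_mono_less_eq[OF aa_smono, of 0 J] by (meson dual_order.trans le0 one_le_numeral power_increasing)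
    obtain N2 where N2: "\<And>n. n \<ge> N2 \<Longrightarrow> mm (f n) {..<S} \<le> ennreal (1/4)"
      using low_mass[OF meas ae S0, of "1/4"] by auto
    define n where "n = max N0 (max N1 N2)"
    have "1 < orlicz_modular Phi0 (f n) (1/2)" by (rule P0.norm1_gt[OF norm]) auto
    hence tot: "1 < mm (f n) UNIV" by (simp add: mm_UNIV)
    have "mm (f n) UNIV \<le> mm (f n) {..<S} + mm (f n) {S..}"
      by (rule mm_split[OF meas]) auto
    also have "mm (f n) {S..} \<le> mm (f n) (Hs J \<inter> {S..}) + mm (f n) (Ks J \<inter> {S..})"
      by (rule mm_split[OF meas]) (use Hs_borel Ks_borel cover[OF S00, of J] in auto)
    finally have tot2: "1 < mm (f n) {..<S} + (mm (f n) (Hs J \<inter> {S..}) + mm (f n) (Ks J \<inter> {S..}))"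
      using tot by (meson add_left_mono order_less_le_trans)
    have hH: "mm (f n) (Hs J \<inter> {S..}) < ennreal (1/4)"
    proof -
      have "mm (f n) (Hs J \<inter> {S..}) \<le> mm (f n) (Hs J \<inter> {S1..})" by (rule mm_mono) (auto simp: S_def)
      also have "\<dots> < ennreal (1/4)" using SN1[of n] unfolding n_def by simp
      finally show ?thesis .
    qed
    have half: "ennreal (1/2) \<le> mm (f n) (Ks J \<inter> {S..})"
      by (rule ennreal_split[OF tot2 _ hH]) (use N2[of n] in \<open>simp add: n_def\<close>)
    have key: "ennreal ((t/4) * (1/2)^1) * mm (f n) (Ks J \<inter> {S..}) \<le> orlicz_modular Phi0 (f n) (1/t)"
    proof (rule mm_key[OF meas _ t(1,2)])
      show "Ks J \<inter> {S..} \<in> sets borel" using Ks_borel by auto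
      fix s assume "s \<in> Ks J \<inter> {S..}"
      hence "s \<in> Ks J \<inter> {2^(aa J)..}" using SJ by auto
      thus "card (Win t s) \<le> 1" by (rule win_K[OF t(1,2) J J])
    qed
    have e1: "ennreal ((t/4) * (1/2)^1) * ennreal (1/2) = ennreal ((t/4) * (1/2)^1 * (1/2))"
      by (rule ennreal_mult[symmetric]) (use t in auto)
    have e2: "(t/4) * (1/2)^1 * (1/2) = 1/16 * (1/2::real)^k" unfolding t_def by simp
    have "ennreal (1/16 * (1/2)^k) = ennreal ((t/4) * (1/2)^1) * ennreal (1/2)"
      unfolding e1 e2 ..
    also have "\<dots> \<le> ennreal ((t/4) * (1/2)^1) * mm (f n) (Ks J \<inter> {S..})"
      using half by (rule mult_left_mono) simp
    also have "\<dots> \<le> orlicz_modular Phi0 (f n) (2^k)" using key t(3) by simp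
    finally show "\<exists>n\<ge>N0. ennreal (1/16 * (1/2)^k) \<le> orlicz_modular Phi0 (f n) (2^k)"
      unfolding n_def by (intro exI[of _ "max N0 (max N1 N2)"]) auto
  qed
qed

lemma subseq_choice:
  fixes P :: "nat \<Rightarrow> nat \<Rightarrow> bool"
  assumes "\<And>k N. \<exists>n\<ge>N. P k n"
  shows "\<exists>r. strict_mono r \<and> (\<forall>k. P k (r k))"
proof -
  define r where "r = rec_nat (SOME n. P 0 n) (\<lambda>k rk. SOME n. n \<ge> Suc rk \<and> P (Suc k) n)"
  have r0: "r 0 = (SOME n. P 0 n)" unfolding r_def by simp
  have rS: "r (Suc k) = (SOME n. n \<ge> Suc (r k) \<and> P (Suc k) n)" for k unfolding r_def by simp
  have P0: "P 0 (r 0)" unfolding r0 using assms[where k=0 and N=0] by (metis someI_ex)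
  have PS: "r (Suc k) \<ge> Suc (r k) \<and> P (Suc k) (r (Suc k))" for k
    unfolding rS using assms[where k="Suc k" and N="Suc (r k)"] by (rule someI_ex)
  have "strict_mono r" by (rule strict_mono_Suc_iff[THEN iffD2]) (use PS in \<open>auto simp: Suc_le_eq\<close>)
  moreover have "P k (r k)" for k using P0 PS by (cases k) auto
  ultimately show ?thesis by blast
qed

lemma one_DH_Phi0: "one_DH Phi0"
  unfolding one_DH_def
proof (intro allI impI)
  fix f assume dn: "disj_normalized Phi0 f"
  have meas: "\<And>n. f n \<in> borel_measurable I01" and norm: "\<And>n. lux_norm Phi0 (f n) = 1"
    and ex: "\<And>n. \<exists>l>0. orlicz_modular Phi0 (f n) l \<le> 1"
    using dn unfolding disj_normalized_def orlicz_space_def by auto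
  have ae: "AE x in I01. \<forall>n m. n \<noteq> m \<longrightarrow> f n x = 0 \<or> f m x = 0"
    by (rule AE_pairwise) (use dn in \<open>auto simp: disj_normalized_def\<close>)
  obtain \<kappa> where k: "0 < \<kappa>" "\<And>k N. \<exists>n\<ge>N. ennreal (\<kappa> * (1/2)^k) \<le> orlicz_modular Phi0 (f n) (2^k)"
    using core[OF meas ae norm] by blast
  obtain r where r: "strict_mono r" "\<And>k. ennreal (\<kappa> * (1/2)^k) \<le> orlicz_modular Phi0 (f (r k)) (2^k)"
    using subseq_choice[of "\<lambda>k n. ennreal (\<kappa> * (1/2)^k) \<le> orlicz_modular Phi0 (f n) (2^k)"] k(2) by blast
  have good: "P0.good (f \<circ> r)"
    unfolding P0.good_def
  proof (rule conjI)
    show "\<forall>k. (f \<circ> r) k \<in> borel_measurable I01 \<and> lux_norm Phi0 ((f \<circ> r) k) = 1 \<and> (\<exists>l>0. orlicz_modular Phi0 ((f \<circ> r) k) l \<le> 1)"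
      using meas norm ex by simp
  next
    show "AE x in I01. \<forall>n m. n \<noteq> m \<longrightarrow> (f \<circ> r) n x = 0 \<or> (f \<circ> r) m x = 0"
      using ae by (rule eventually_mono) (use strict_mono_eq[OF r(1)] in auto)
  qed
  obtain C where "0 < C" "l1_equiv Phi0 (f \<circ> r) C"
    using P0.good_l1[OF good k(1)] r(2) by auto
  thus "\<exists>r C. strict_mono r \<and> C > 0 \<and> l1_equiv Phi0 (f \<circ> r) C" using r(1) by blast
qed


lemma I01_Ico: assumes "0 \<le> a" "a \<le> b" "b \<le> 1"
  shows "emeasure I01 {a..<b} = ennreal (b - a)"
proof -
  have "emeasure I01 {a..<b} = emeasure lebesgue {a..<b}"
    using assms by (subst emeasure_restrict_space) auto
  thus ?thesis using assms by simp
qed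

lemma Phi0_pos: "0 < h \<Longrightarrow> 0 < Phi0 h"
  using PhiE_ge[of h EE] by linarith

lemma ind_modular:
  assumes A: "A \<in> sets I01" and mA: "emeasure I01 A = ennreal (1 / Phi0 h)" and h: "0 < h"
    and a: "0 < a" and l: "0 < l"
  shows "orlicz_modular Phi0 (\<lambda>x. a * indicator A x) l \<le> 1 \<longleftrightarrow> a / h \<le> l"
proof -
  have P: "0 < Phi0 h" by (rule Phi0_pos[OF h])
  have "orlicz_modular Phi0 (\<lambda>x. a * indicator A x) l = ennreal (Phi0 (a / l)) * ennreal (1 / Phi0 h)"
    using P0.modular_ind[OF A _ l, of a] a mA by simp
  also have "\<dots> = ennreal (Phi0 (a / l) / Phi0 h)"
    using P PhiE_nonneg[of "a/l" EE] a l by (simp add: ennreal_mult[symmetric])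
  finally have eq: "orlicz_modular Phi0 (\<lambda>x. a * indicator A x) l = ennreal (Phi0 (a / l) / Phi0 h)" .
  have "orlicz_modular Phi0 (\<lambda>x. a * indicator A x) l \<le> 1 \<longleftrightarrow> Phi0 (a / l) / Phi0 h \<le> 1"
    unfolding eq by (metis ennreal_1 ennreal_le_iff zero_le_one)
  also have "\<dots> \<longleftrightarrow> Phi0 (a / l) \<le> Phi0 h" using P by simp
  also have "\<dots> \<longleftrightarrow> a / l \<le> h"
  proof
    assume "Phi0 (a / l) \<le> Phi0 h" thus "a / l \<le> h" using PhiE_strict[of h "a/l" EE] by linarith
  next
    assume "a / l \<le> h" thus "Phi0 (a / l) \<le> Phi0 h" using PhiE_mono[of EE] by (simp add: monoD)
  qed
  also have "\<dots> \<longleftrightarrow> a / h \<le> l" using a h l by (simp add: field_simps)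
  finally show ?thesis .
qed

lemma ind_norm:
  assumes A: "A \<in> sets I01" and mA: "emeasure I01 A = ennreal (1 / Phi0 h)" and h: "0 < h" and a: "0 < a"
  shows "lux_norm Phi0 (\<lambda>x. a * indicator A x) = a / h"
proof (rule antisym)
  show "lux_norm Phi0 (\<lambda>x. a * indicator A x) \<le> a / h"
  proof (rule P0.lux_le)
    fix l assume l: "a / h < l"
    have "0 < a / h" using a h by simp
    hence "0 < l" using l by linarith
    thus "orlicz_modular Phi0 (\<lambda>x. a * indicator A x) l \<le> 1" using ind_modular[OF A mA h a \<open>0 < l\<close>] l by simp
  qed (use a h in simp)
  show "a / h \<le> lux_norm Phi0 (\<lambda>x. a * indicator A x)"
  proof (rule P0.lux_ge)
    show "\<exists>l>0. orlicz_modular Phi0 (\<lambda>x. a * indicator A x) l \<le> 1"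
      using ind_modular[OF A mA h a, of "a/h"] a h by (intro exI[of _ "a/h"]) auto
    fix l assume "0 < l" "l < a / h"
    thus "1 < orlicz_modular Phi0 (\<lambda>x. a * indicator A x) l"
      using ind_modular[OF A mA h a, of l] by (auto simp: not_le[symmetric])
  qed
qed

lemma chi_bar_eq:
  assumes A: "A \<in> sets I01" and mA: "emeasure I01 A = ennreal (1 / Phi0 h)" and h: "0 < h"
  shows "chi_bar Phi0 A = (\<lambda>x. h * indicator A x)"
proof -
  have "lux_norm Phi0 (indicator A) = lux_norm Phi0 (\<lambda>x. 1 * indicator A x)" by simp
  also have "\<dots> = 1 / h" by (rule ind_norm[OF A mA h]) simp
  finally show ?thesis unfolding chi_bar_def by (auto simp: field_simps)
qed

definition hh :: "nat \<Rightarrow> real" where "hh j = 2^(aa j + qq j * qq j + 2)"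
definition Iv :: "nat \<Rightarrow> real set" where "Iv j = {(1/2::real)^(j+1) ..< (1/2)^(j+1) + 1 / Phi0 (hh j)}"

lemma hh_pos: "0 < hh j" unfolding hh_def by simp

lemma hh_ge: "(2::real)^(j+1) \<le> hh j"
  unfolding hh_def using aa_ge[of j] by (intro power_increasing) auto

lemma ratio: "Phi0 (2^(aa j)) \<le> (2 / 2^(qq j * qq j + 2)) * (1/2)^(qq j) * Phi0 (hh j)"
proof -
  define q where "q = qq j"
  define x where "x = (2::real)^(aa j)"
  have hx: "hh j = x * 2^(q*q+2)" unfolding hh_def x_def q_def by (simp add: power_add)
  have x0: "0 < x" unfolding x_def by simp
  have o: "1 \<le> (2::real)^(q*q+1)" by (rule one_le_power) simp
  have "x * 1 \<le> x * 2^(q*q+1)" using x0 o by (intro mult_left_mono) auto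
  moreover have "hh j / 2 = x * 2^(q*q+1)" unfolding hx by simp
  ultimately have "x \<le> hh j / 2" by simp
  hence N: "NN EE (hh j / 2) = NN EE x + card {e\<in>EE. x \<le> 2^e \<and> (2::real)^e < hh j / 2}" by (rule NN_split)
  have sub: "Cl j \<subseteq> {e\<in>EE. x \<le> 2^e \<and> (2::real)^e < hh j / 2}"
  proof
    fix e assume e: "e \<in> Cl j"
    have b: "aa j < e" "e \<le> aa j + q * q" using Cl_bounds[OF e] unfolding q_def by auto
    have c1: "x \<le> 2^e" unfolding x_def using b by (intro power_increasing) auto
    have p1: "(2::real)^e \<le> 2^(aa j + q*q)" using b by (intro power_increasing) auto
    have p2: "(2::real)^(aa j + q*q) < hh j / 2" unfolding hh_def q_def by (simp add: power_add)
    have c2: "(2::real)^e < hh j / 2" using p1 p2 by linarith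
    have c3: "e \<in> EE" unfolding EE_def using e by blast
    show "e \<in> {e\<in>EE. x \<le> 2^e \<and> (2::real)^e < hh j / 2}" using c1 c2 c3 by blast
  qed
  have fin: "finite {e\<in>EE. x \<le> 2^e \<and> (2::real)^e < hh j / 2}"
    by (rule finite_subset[OF _ finite_low[of EE "hh j / 2"]]) auto
  have "q \<le> card {e\<in>EE. x \<le> 2^e \<and> (2::real)^e < hh j / 2}"
    using card_mono[OF fin sub] card_Cl unfolding q_def by simp
  hence NN: "NN EE x + q \<le> NN EE (hh j / 2)" using N by simp
  have up: "Phi0 x \<le> x * 2^(NN EE x)" by (rule PhiE_upper) (use x0 in simp)
  have lo: "(hh j - hh j / 2) * 2^(NN EE (hh j / 2)) \<le> Phi0 (hh j)"
    by (rule PhiE_lower) (use hh_pos[of j] in auto)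
  have "(2::real)^(NN EE x) * 2^q \<le> 2^(NN EE (hh j / 2))"
    using NN by (simp add: power_add[symmetric])
  hence "x * 2^(NN EE x) * 2^q \<le> x * 2^(NN EE (hh j / 2))" using x0 by (simp add: mult.assoc)
  also have "\<dots> = (2 / 2^(q*q+2)) * ((hh j - hh j / 2) * 2^(NN EE (hh j / 2)))" unfolding hx by (simp add: field_simps)
  also have "\<dots> \<le> (2 / 2^(q*q+2)) * Phi0 (hh j)" using lo by (intro mult_left_mono) auto
  finally have "x * 2^(NN EE x) \<le> (2 / 2^(q*q+2)) * Phi0 (hh j) / 2^q" by (simp add: field_simps)
  hence "Phi0 x \<le> (2 / 2^(q*q+2)) * Phi0 (hh j) / 2^q" using up by linarith
  thus ?thesis unfolding x_def q_def by (simp add: field_simps power_one_over)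
qed

lemma Iv_small: "1 / Phi0 (hh j) \<le> (1/2)^(j+1)"
proof -
  have "hh j \<le> Phi0 (hh j)" by (rule PhiE_ge)
  hence "(2::real)^(j+1) \<le> Phi0 (hh j)" using hh_ge[of j] by linarith
  hence "1 / Phi0 (hh j) \<le> 1 / 2^(j+1)" using Phi0_pos[OF hh_pos[of j]] by (intro divide_left_mono) auto
  thus ?thesis by (simp add: power_one_over)
qed

lemma Iv_sub: "Iv j \<subseteq> {(1/2::real)^(j+1) ..< (1/2)^j}"
  unfolding Iv_def using Iv_small[of j] by auto

lemma Iv_01: "Iv j \<subseteq> {0..1}"
proof -
  have "(1/2::real)^j \<le> 1" by (simp add: power_le_one)
  thus ?thesis using Iv_sub[of j] by (force simp: less_eq_real_def)
qed

lemma Iv_measure: "emeasure I01 (Iv j) = ennreal (1 / Phi0 (hh j))"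
proof -
  have P: "0 < Phi0 (hh j)" by (rule Phi0_pos[OF hh_pos])
  have "(1/2::real)^(j+1) + 1 / Phi0 (hh j) \<le> 1"
  proof -
    have "(1/2::real)^(j+1) + 1 / Phi0 (hh j) \<le> (1/2)^(j+1) + (1/2)^(j+1)" using Iv_small[of j] by simp
    also have "\<dots> = (1/2)^j" by simp
    also have "\<dots> \<le> 1" by (simp add: power_le_one)
    finally show ?thesis .
  qed
  hence "emeasure I01 (Iv j) = ennreal ((1/2)^(j+1) + 1 / Phi0 (hh j) - (1/2)^(j+1))"
    unfolding Iv_def using P by (intro I01_Ico) auto
  thus ?thesis by simp
qed

lemma Iv_sets: "Iv j \<in> sets I01"
proof -
  have "Iv j \<in> sets lebesgue" unfolding Iv_def by simp
  thus ?thesis using Iv_01[of j] by (simp add: sets_restrict_space_iff)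
qed

lemma Iv_disj: "i \<noteq> j \<Longrightarrow> Iv i \<inter> Iv j = {}"
proof -
  have *: "Iv i \<inter> Iv j = {}" if "i < j" for i j
  proof -
    have "(1/2::real)^j \<le> (1/2)^(i+1)" using that by (intro power_decreasing) auto
    show ?thesis
    proof (rule ccontr)
      assume "Iv i \<inter> Iv j \<noteq> {}"
      then obtain x where "x \<in> Iv i" "x \<in> Iv j" by auto
      hence "(1/2::real)^(i+1) \<le> x" "x < (1/2)^j" using Iv_sub[of i] Iv_sub[of j] by auto
      thus False using \<open>(1/2::real)^j \<le> (1/2)^(i+1)\<close> by linarith
    qed
  qed
  assume "i \<noteq> j" thus ?thesis using *[of i j] *[of j i] by (cases "i < j") auto
qed

lemma sum_modular_bound:
  fixes J :: "nat \<Rightarrow> nat" assumes inj: "inj J" and q: "\<And>k. qq (J k) = q"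
  shows "orlicz_modular Phi0 (\<lambda>x. \<Sum>k<m. hh (J k) * indicator (Iv (J k)) x) (2^(q*q+2))
          \<le> ennreal (real m * ((2 / 2^(q*q+2)) * (1/2)^q))"
proof -
  define L :: real where "L = 2^(q*q+2)"
  define B where "B = (2 / L) * (1/2::real)^q"
  have L0: "0 < L" unfolding L_def by simp
  have "orlicz_modular Phi0 (\<lambda>x. \<Sum>k<m. hh (J k) * indicator (Iv (J k)) x) L
        = (\<Sum>k<m. orlicz_modular Phi0 (\<lambda>x. hh (J k) * indicator (Iv (J k)) x) L)"
  proof (rule P0.modular_disj_sum)
    show "AE x in I01. \<forall>k<m. \<forall>k'<m. k \<noteq> k' \<longrightarrow> hh (J k) * indicator (Iv (J k)) x = 0 \<or> hh (J k') * indicator (Iv (J k')) x = 0"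
    proof (rule AE_I2, intro allI impI)
      fix x :: real and k k' :: nat assume "x \<in> space I01" "k < m" "k' < m" "k \<noteq> k'"
      hence "J k \<noteq> J k'" using inj by (auto dest: injD)
      hence "Iv (J k) \<inter> Iv (J k') = {}" by (rule Iv_disj)
      thus "hh (J k) * indicator (Iv (J k)) x = 0 \<or> hh (J k') * indicator (Iv (J k')) x = (0::real)"
        by (auto simp: indicator_def)
    qed
    fix k show "(\<lambda>x. hh (J k) * indicator (Iv (J k)) x) \<in> borel_measurable I01"
      using Iv_sets[of "J k"] by (intro borel_measurable_times borel_measurable_indicator) auto
  qed (rule L0)
  also have "\<dots> \<le> (\<Sum>k<m. ennreal B)"
  proof (rule sum_mono)
    fix k
    have hq: "hh (J k) / L = 2^(aa (J k))" unfolding hh_def L_def q[of k] by (simp add: power_add)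
    have P: "0 < Phi0 (hh (J k))" by (rule Phi0_pos[OF hh_pos])
    have "orlicz_modular Phi0 (\<lambda>x. hh (J k) * indicator (Iv (J k)) x) L = ennreal (Phi0 (hh (J k) / L)) * emeasure I01 (Iv (J k))"
      by (rule P0.modular_ind[OF Iv_sets _ L0]) (use hh_pos in \<open>simp add: less_imp_le\<close>)
    also have "\<dots> = ennreal (Phi0 (2^(aa (J k)))) * ennreal (1 / Phi0 (hh (J k)))" unfolding hq Iv_measure ..
    also have "\<dots> = ennreal (Phi0 (2^(aa (J k))) / Phi0 (hh (J k)))"
      using P PhiE_nonneg[of "2^(aa (J k))" EE] by (simp add: ennreal_mult[symmetric])
    also have "\<dots> \<le> ennreal B"
    proof (rule ennreal_leI)
      have "Phi0 (2^(aa (J k))) \<le> B * Phi0 (hh (J k))" using ratio[of "J k"] unfolding B_def L_def q[of k] by simp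
      thus "Phi0 (2^(aa (J k))) / Phi0 (hh (J k)) \<le> B" using P by (simp add: divide_le_eq)
    qed
    finally show "orlicz_modular Phi0 (\<lambda>x. hh (J k) * indicator (Iv (J k)) x) L \<le> ennreal B" .
  qed
  also have "\<dots> = of_nat m * ennreal B" by simp
  also have "\<dots> = ennreal (real m) * ennreal B" by (simp add: ennreal_of_nat_eq_real_of_nat)
  also have "\<dots> = ennreal (real m * B)"
    by (rule ennreal_mult[symmetric]) (use L0 in \<open>auto simp: B_def\<close>)
  finally show ?thesis unfolding L_def B_def .
qed

lemma Iv_leb: "Iv j \<in> sets lebesgue" unfolding Iv_def by simp

lemma Iv_meas_leb: "measure lebesgue (Iv j) = 1 / Phi0 (hh j)"
proof -
  have P: "0 < Phi0 (hh j)" by (rule Phi0_pos[OF hh_pos])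
  have "emeasure lebesgue (Iv j) = ennreal (1 / Phi0 (hh j))"
    unfolding Iv_def using P by simp
  thus ?thesis unfolding measure_def using P by simp
qed

lemma badfam: assumes c: "0 < c"
  shows "\<exists>E::nat \<Rightarrow> real set. (\<forall>n. E n \<in> sets lebesgue \<and> E n \<subseteq> {0..1} \<and> measure lebesgue (E n) > 0)
     \<and> disjoint_family E
     \<and> (\<forall>n. E n \<in> sets I01 \<and> (\<exists>h>0. emeasure I01 (E n) = ennreal (1 / Phi0 h)))
     \<and> (\<forall>r. strict_mono r \<longrightarrow> (\<exists>m::nat. m \<ge> 1 \<and> lux_norm Phi0 (\<lambda>x. \<Sum>k<m. chi_bar Phi0 (E (r k)) x) < c * real m))"
proof -
  obtain q0 where q0: "2 / c + 1 < (2::real)^q0" using real_arch_pow[of 2 "2/c+1"] by auto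
  define q where "q = q0 + 1"
  define jf where "jf n = prod_encode (q0, n)" for n
  have qj: "qq (jf n) = q" for n unfolding jf_def q_def by (simp add: qq_encode)
  have jfm: "strict_mono jf" unfolding jf_def by (rule prod_encode_smono)
  define E where "E n = Iv (jf n)" for n
  have "(2::real)^q0 \<le> 2^q" unfolding q_def by (intro power_increasing) auto
  hence q2: "2 / c + 1 \<le> (2::real)^q" using q0 by linarith
  show ?thesis
  proof (intro exI[of _ E] conjI allI impI)
    fix n
    show "E n \<in> sets lebesgue" unfolding E_def by (rule Iv_leb)
    show "E n \<subseteq> {0..1}" unfolding E_def by (rule Iv_01)
    show "measure lebesgue (E n) > 0" unfolding E_def Iv_meas_leb using Phi0_pos[OF hh_pos] by simp
    show "E n \<in> sets I01" unfolding E_def by (rule Iv_sets)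
    show "\<exists>h>0. emeasure I01 (E n) = ennreal (1 / Phi0 h)" unfolding E_def using hh_pos Iv_measure by blast
  next
    show "disjoint_family E" unfolding disjoint_family_on_def E_def
      using Iv_disj strict_mono_eq[OF jfm] by auto
  next
    fix r :: "nat \<Rightarrow> nat" assume r: "strict_mono r"
    define J where "J = jf \<circ> r"
    have Jm: "strict_mono J" unfolding J_def using jfm r by (simp add: strict_mono_def)
    have inj: "inj J" using Jm by (rule strict_mono_imp_inj_on)
    define L :: real where "L = 2^(q*q+2)"
    have L4: "4 \<le> L" unfolding L_def by (simp add: power_add)
    define m where "m = nat \<lfloor>L / c\<rfloor> + 1"
    have m1: "m \<ge> 1" unfolding m_def by simp
    have mlo: "L / c < real m" unfolding m_def using c L4 by linarith
    have mhi: "real m \<le> L / c + 1" unfolding m_def using c L4 by (simp add: of_nat_nat)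
    have chi: "chi_bar Phi0 (E (r k)) = (\<lambda>x. hh (J k) * indicator (Iv (J k)) x)" for k
      unfolding E_def J_def by (simp add: chi_bar_eq[OF Iv_sets Iv_measure hh_pos])
    have funeq: "(\<lambda>x. \<Sum>k<m. chi_bar Phi0 (E (r k)) x) = (\<lambda>x. \<Sum>k<m. hh (J k) * indicator (Iv (J k)) x)"
      by (simp add: chi)
    have bound: "orlicz_modular Phi0 (\<lambda>x. \<Sum>k<m. hh (J k) * indicator (Iv (J k)) x) L \<le> 1"
    proof -
      have qJ: "\<And>k. qq (J k) = q" unfolding J_def using qj by simp
      have "orlicz_modular Phi0 (\<lambda>x. \<Sum>k<m. hh (J k) * indicator (Iv (J k)) x) L \<le> ennreal (real m * ((2 / L) * (1/2)^q))"
        using sum_modular_bound[OF inj qJ, of m] unfolding L_def .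
      also have "real m * ((2 / L) * (1/2)^q) \<le> 1"
      proof -
        have "real m * (2 / L) \<le> (L / c + 1) * (2 / L)" using mhi L4 by (intro mult_right_mono) auto
        also have "\<dots> = 2 / c + 2 / L" using L4 by (simp add: field_simps)
        also have "\<dots> \<le> 2 / c + 1" using L4 by simp
        also have "\<dots> \<le> 2^q" by (rule q2)
        finally have "real m * (2 / L) * (1/2)^q \<le> 2^q * (1/2)^q" by (intro mult_right_mono) auto
        also have "(2::real)^q * (1/2)^q = 1" by (simp add: power_mult_distrib[symmetric])
        finally show ?thesis by (simp add: mult.assoc)
      qed
      hence "ennreal (real m * ((2 / L) * (1/2)^q)) \<le> 1" by (simp add: ennreal_le_1)
      finally show ?thesis .
    qed
    have "lux_norm Phi0 (\<lambda>x. \<Sum>k<m. hh (J k) * indicator (Iv (J k)) x) \<le> L"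
    proof (rule P0.lux_le)
      fix l assume "L < l"
      hence "orlicz_modular Phi0 (\<lambda>x. \<Sum>k<m. hh (J k) * indicator (Iv (J k)) x) l \<le> orlicz_modular Phi0 (\<lambda>x. \<Sum>k<m. hh (J k) * indicator (Iv (J k)) x) L"
        using L4 by (intro P0.modular_mono) auto
      thus "orlicz_modular Phi0 (\<lambda>x. \<Sum>k<m. hh (J k) * indicator (Iv (J k)) x) l \<le> 1" using bound by order
    qed (use L4 in simp)
    moreover have "L < c * real m" using mlo c by (simp add: field_simps)
    ultimately have "lux_norm Phi0 (\<lambda>x. \<Sum>k<m. chi_bar Phi0 (E (r k)) x) < c * real m"
      unfolding funeq by linarith
    thus "\<exists>m::nat. m \<ge> 1 \<and> lux_norm Phi0 (\<lambda>x. \<Sum>k<m. chi_bar Phi0 (E (r k)) x) < c * real m"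
      using m1 by blast
  qed
qed


lemma orlicz_Phi0: "orlicz_function Phi0"
  unfolding orlicz_function_def
proof (intro conjI)
  show "mono_on {0..} Phi0" using PhiE_mono[of EE] by (simp add: mono_on_def monoD)
  show "convex_on {0..} Phi0" by (rule convex_on_subset[OF PhiE_convex]) auto
  show "Phi0 0 = 0" by simp
  show "filterlim Phi0 at_top at_top"
    by (rule filterlim_at_top_mono[OF filterlim_ident]) (auto simp: PhiE_ge)
qed

lemma chi_facts:
  assumes A: "A \<in> sets I01" and h: "0 < h" and mA: "emeasure I01 A = ennreal (1 / Phi0 h)"
  shows "chi_bar Phi0 A \<in> orlicz_space Phi0" "lux_norm Phi0 (chi_bar Phi0 A) = 1"
proof -
  have eq: "chi_bar Phi0 A = (\<lambda>x. h * indicator A x)" by (rule chi_bar_eq[OF A mA h])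
  show "chi_bar Phi0 A \<in> orlicz_space Phi0" unfolding orlicz_space_def eq
  proof (intro CollectI conjI)
    show "(\<lambda>x. h * indicator A x) \<in> borel_measurable I01"
      using A by (intro borel_measurable_times borel_measurable_indicator) auto
    show "\<exists>lam>0. orlicz_modular Phi0 (\<lambda>x. h * indicator A x) lam \<le> 1"
      using ind_modular[OF A mA h h, of 1] by (intro exI[of _ 1]) (use h in auto)
  qed
  show "lux_norm Phi0 (chi_bar Phi0 A) = 1" unfolding eq using ind_norm[OF A mA h h] h by simp
qed

theorem mainTheorem13:
  shows "\<exists>\<Phi>. orlicz_function \<Phi> \<and> one_DH \<Phi> \<and> \<not> uniform_one_DH \<Phi> \<and>
    \<not> (\<exists>c>0. \<forall>E :: nat \<Rightarrow> real set.
          ((\<forall>n. E n \<in> sets lebesgue \<and> E n \<subseteq> {0..1} \<and> measure lebesgue (E n) > 0)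
           \<and> disjoint_family E)
          \<longrightarrow> (\<exists>r. strict_mono r \<and>
                (\<forall>m::nat. m \<ge> 1 \<longrightarrow>
                   lux_norm \<Phi> (\<lambda>x. \<Sum>k<m. chi_bar \<Phi> (E (r k)) x) \<ge> c * real m)))"
proof (intro exI[of _ Phi0] conjI)
  show "orlicz_function Phi0" by (rule orlicz_Phi0)
  show "one_DH Phi0" by (rule one_DH_Phi0)
  show "\<not> uniform_one_DH Phi0"
  proof
    assume "uniform_one_DH Phi0"
    then obtain C where C: "0 < C" "\<And>f. disj_normalized Phi0 f \<Longrightarrow> \<exists>r. strict_mono r \<and> l1_equiv Phi0 (f \<circ> r) C"
      unfolding uniform_one_DH_def by blast
    have "0 < 1 / C" using C by simp
    from badfam[OF this] obtain E :: "nat \<Rightarrow> real set" where EE: "(\<forall>n. E n \<in> sets lebesgue \<and> E n \<subseteq> {0..1} \<and> measure lebesgue (E n) > 0)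
     \<and> disjoint_family E
     \<and> (\<forall>n. E n \<in> sets I01 \<and> (\<exists>h>0. emeasure I01 (E n) = ennreal (1 / Phi0 h)))
     \<and> (\<forall>r. strict_mono r \<longrightarrow> (\<exists>m::nat. m \<ge> 1 \<and> lux_norm Phi0 (\<lambda>x. \<Sum>k<m. chi_bar Phi0 (E (r k)) x) < 1 / C * real m))"
      by blast
    have E2: "disjoint_family E" using EE by (elim conjE)
    have E3: "\<And>n. E n \<in> sets I01" "\<And>n. \<exists>h>0. emeasure I01 (E n) = ennreal (1 / Phi0 h)" using EE by auto
    have E4: "\<And>r. strict_mono r \<Longrightarrow> \<exists>m::nat. m \<ge> 1 \<and> lux_norm Phi0 (\<lambda>x. \<Sum>k<m. chi_bar Phi0 (E (r k)) x) < 1 / C * real m"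
      using EE by (elim conjE) auto
    define f where "f n = chi_bar Phi0 (E n)" for n :: nat
    have fh: "\<exists>h>0. f n = (\<lambda>x. h * indicator (E n) x) \<and> f n \<in> orlicz_space Phi0 \<and> lux_norm Phi0 (f n) = 1" for n
    proof -
      obtain h where h: "0 < h" "emeasure I01 (E n) = ennreal (1 / Phi0 h)" using E3(2)[of n] by blast
      show ?thesis unfolding f_def
        using chi_bar_eq[OF E3(1)[of n] h(2) h(1)] chi_facts[OF E3(1)[of n] h(1) h(2)] h(1) by blast
    qed
    have dn: "disj_normalized Phi0 f"
      unfolding disj_normalized_def
    proof (intro conjI allI impI)
      fix n
      show "f n \<in> orlicz_space Phi0" using fh[of n] by blast
      show "lux_norm Phi0 (f n) = 1" using fh[of n] by blast
    next
      fix n m :: nat assume nm: "n \<noteq> m"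
      obtain h where fn: "f n = (\<lambda>x. h * indicator (E n) x)" using fh[of n] by blast
      obtain h' where fm: "f m = (\<lambda>x. h' * indicator (E m) x)" using fh[of m] by blast
      have "E n \<inter> E m = {}" using E2 nm unfolding disjoint_family_on_def by auto
      thus "AE x in I01. f n x = 0 \<or> f m x = 0" unfolding fn fm
        by (intro AE_I2) (auto simp: indicator_def)
    qed
    obtain r where r: "strict_mono r" "l1_equiv Phi0 (f \<circ> r) C" using C(2)[OF dn] by blast
    obtain m :: nat where m: "m \<ge> 1" "lux_norm Phi0 (\<lambda>x. \<Sum>k<m. chi_bar Phi0 (E (r k)) x) < 1 / C * real m"
      using E4[OF r(1)] by blast
    have L: "\<And>m c. (1 / C) * (\<Sum>k<m. \<bar>c k\<bar>) \<le> lux_norm Phi0 (\<lambda>t. \<Sum>k<m. c k * (f \<circ> r) k t)"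
      using r(2) unfolding l1_equiv_def by blast
    have "(1 / C) * (\<Sum>k<m. \<bar>(\<lambda>_. 1::real) k\<bar>) \<le> lux_norm Phi0 (\<lambda>t. \<Sum>k<m. (\<lambda>_. 1::real) k * (f \<circ> r) k t)"
      by (rule L)
    hence "(1 / C) * real m \<le> lux_norm Phi0 (\<lambda>x. \<Sum>k<m. chi_bar Phi0 (E (r k)) x)"
      by (simp add: f_def)
    thus False using m(2) by linarith
  qed
  show "\<not> (\<exists>c>0. \<forall>E :: nat \<Rightarrow> real set.
          ((\<forall>n. E n \<in> sets lebesgue \<and> E n \<subseteq> {0..1} \<and> measure lebesgue (E n) > 0)
           \<and> disjoint_family E)
          \<longrightarrow> (\<exists>r. strict_mono r \<and>
                (\<forall>m::nat. m \<ge> 1 \<longrightarrow>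
                   lux_norm Phi0 (\<lambda>x. \<Sum>k<m. chi_bar Phi0 (E (r k)) x) \<ge> c * real m)))"
  proof
    assume "\<exists>c>0. \<forall>E :: nat \<Rightarrow> real set.
          ((\<forall>n. E n \<in> sets lebesgue \<and> E n \<subseteq> {0..1} \<and> measure lebesgue (E n) > 0)
           \<and> disjoint_family E)
          \<longrightarrow> (\<exists>r. strict_mono r \<and>
                (\<forall>m::nat. m \<ge> 1 \<longrightarrow>
                   lux_norm Phi0 (\<lambda>x. \<Sum>k<m. chi_bar Phi0 (E (r k)) x) \<ge> c * real m))"
    then obtain c where c: "0 < c" and P: "\<And>E :: nat \<Rightarrow> real set.
          ((\<forall>n. E n \<in> sets lebesgue \<and> E n \<subseteq> {0..1} \<and> measure lebesgue (E n) > 0)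
           \<and> disjoint_family E)
          \<Longrightarrow> (\<exists>r. strict_mono r \<and>
                (\<forall>m::nat. m \<ge> 1 \<longrightarrow>
                   lux_norm Phi0 (\<lambda>x. \<Sum>k<m. chi_bar Phi0 (E (r k)) x) \<ge> c * real m))" by blast
    from badfam[OF c] obtain E :: "nat \<Rightarrow> real set" where E: "\<forall>n. E n \<in> sets lebesgue \<and> E n \<subseteq> {0..1} \<and> measure lebesgue (E n) > 0"
      "disjoint_family E"
      "\<forall>r. strict_mono r \<longrightarrow> (\<exists>m::nat. m \<ge> 1 \<and> lux_norm Phi0 (\<lambda>x. \<Sum>k<m. chi_bar Phi0 (E (r k)) x) < c * real m)"
      by blast
    obtain r where r: "strict_mono r" "\<forall>m::nat. m \<ge> 1 \<longrightarrow> lux_norm Phi0 (\<lambda>x. \<Sum>k<m. chi_bar Phi0 (E (r k)) x) \<ge> c * real m"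
      using P[of E] E(1,2) by blast
    obtain m :: nat where "m \<ge> 1" "lux_norm Phi0 (\<lambda>x. \<Sum>k<m. chi_bar Phi0 (E (r k)) x) < c * real m"
      using E(3) r(1) by blast
    thus False using r(2) by force
  qed
qed


end
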